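(* Assume in addition that $f_i'(u)+1\neq 0$ for all $u\in\mathbb R$ and all $1\le i\le k$. Then $\mathcal M_F$ is $0$-modeled on $\mathcal V=(\mathbb R^{3k+2},(\cdot,\cdot),R)$: for every point $P\in\mathbb R^{3k+2}$ there is a linear isometry $\Phi_P:(T_P\mathbb R^{3k+2},g_F|_P)\to(\mathbb R^{3k+2},(\cdot,\cdot))$ with $\Phi_P^*R=R_P$, where $R_P$ is the curvature tensor of $g_F$ at $P$. Equivalently, every tangent space $T_P\mathcal M_F$ admits a normalized basis with respect to $g_F|_P$ and $R_P$. In particular $\mathcal M_F$ is $0$-curvature homogeneous.
   Context: Fix an integer $k\ge 1$ and signs $\varepsilon_1,\dots,\varepsilon_k\in\{\pm1\}$. Let $f_1,\dots,f_k:\mathbb R\to\mathbb R$ be smooth functions and $F=(f_1,\dots,f_k)$. On $\mathbb R^{3k+2}$ with coordinates $(u_0,\dots,u_k,v_0,\dots,v_k,s_1,\dots,s_k)$ let $g_F$ be the symmetric metric whose only nonzero components on coordinate vector fields are (up to symmetry), for $1\le i\le k$ and $0\le i',j\le k$: $g_F(\partial_{u_0},\partial_{u_i})=2f_i(u_i)s_i$, $g_F(\partial_{u_i},\partial_{u_i})=-2u_0s_i$, $g_F(\partial_{u_{i'}},\partial_{v_j})=\delta_{i'j}$, $g_F(\partial_{s_i},\partial_{s_i})=\varepsilon_i$. Write $\mathcal M_F=(\mathbb R^{3k+2},g_F)$, $\nabla$ for its Levi-Civita connection and $R(X,Y,Z,W)=g_F(\nabla_X\nabla_YZ-\nabla_Y\nabla_XZ-\nabla_{[X,Y]}Z,W)$.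 Model: let $V=\mathbb R^{3k+2}$ with basis $\{U_0,\dots,U_k,V_0,\dots,V_k,S_1,\dots,S_k\}$, let $(\cdot,\cdot)$ be the symmetric inner product whose only nonzero values on pairs of basis vectors are $(U_i,V_i)=(V_i,U_i)=1$ for $0\le i\le k$ and $(S_i,S_i)=\varepsilon_i$ for $1\le i\le k$, and let $R$ be the algebraic curvature tensor on $V$ (a 4-linear form with $R(x,y,z,w)=-R(y,x,z,w)=R(z,w,x,y)$ and $R(x,y,z,w)+R(y,z,x,w)+R(z,x,y,w)=0$) whose only nonzero values on 4-tuples of basis vectors are those obtained from $R(U_0,U_i,U_i,S_i)=1$ ($1\le i\le k$) by these symmetries. Set $\mathcal V=(V,(\cdot,\cdot),R)$. Given a vector space $W$ with a symmetric bilinear form $\langle\cdot,\cdot\rangle$ and a 4-tensor $T$, a normalized basis of $(W,\langle\cdot,\cdot\rangle,T)$ is a basis $\{U_0',\dots,U_k',V_0',\dots,V_k',S_1',\dots,S_k'\}$ on which $\langle\cdot,\cdot\rangle$ and $T$ take exactly the values just described for $(\cdot,\cdot)$ and $R$ on the standard basis. *)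

theory Defs
  imports "HOL-Analysis.Analysis"
begin

text \<open>Points of and tangent vectors at R^N (N = 3k+2) are represented
  as functions nat => real, only the components with index < N being relevant.
  Coordinate indices: u_i is index i (0 <= i <= k), v_j is index k+1+j (0 <= j <= k),
  s_i is index 2k+1+i (1 <= i <= k).  The same index layout is used for the basis
  U_0..U_k, V_0..V_k, S_1..S_k of the model space.\<close>

definition smooth_fun :: "(real \<Rightarrow> real) \<Rightarrow> bool" where
  "smooth_fun f \<longleftrightarrow> (\<forall>m x. ((deriv ^^ m) f) differentiable (at x))"

definition pd :: "((nat \<Rightarrow> real) \<Rightarrow> real) \<Rightarrow> nat \<Rightarrow> (nat \<Rightarrow> real) \<Rightarrow> real" where
  "pd h a x = deriv (\<lambda>t. h (x(a := t))) (x a)"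

definition gF :: "nat \<Rightarrow> (nat \<Rightarrow> real) \<Rightarrow> (nat \<Rightarrow> real \<Rightarrow> real)
                  \<Rightarrow> (nat \<Rightarrow> real) \<Rightarrow> nat \<Rightarrow> nat \<Rightarrow> real" where
  "gF k eps F x a b =
     (if a = 0 \<and> 1 \<le> b \<and> b \<le> k then 2 * F b (x b) * x (2*k+1+b)
      else if b = 0 \<and> 1 \<le> a \<and> a \<le> k then 2 * F a (x a) * x (2*k+1+a)
      else if a = b \<and> 1 \<le> a \<and> a \<le> k then - 2 * x 0 * x (2*k+1+a)
      else if a \<le> k \<and> b = a + k + 1 then 1
      else if b \<le> k \<and> a = b + k + 1 then 1
      else if a = b \<and> 2*k+2 \<le> a \<and> a < 3*k+2 then eps (a - (2*k+1))
      else 0)"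

definition Gamma1 :: "((nat \<Rightarrow> real) \<Rightarrow> nat \<Rightarrow> nat \<Rightarrow> real) \<Rightarrow> nat \<Rightarrow> nat \<Rightarrow> nat
                      \<Rightarrow> (nat \<Rightarrow> real) \<Rightarrow> real" where
  "Gamma1 g a b c x =
     (pd (\<lambda>y. g y b c) a x + pd (\<lambda>y. g y a c) b x - pd (\<lambda>y. g y a b) c x) / 2"

definition Gamma2 :: "((nat \<Rightarrow> real) \<Rightarrow> nat \<Rightarrow> nat \<Rightarrow> real) \<Rightarrow> nat \<Rightarrow> (nat \<Rightarrow> real)
                      \<Rightarrow> nat \<Rightarrow> nat \<Rightarrow> nat \<Rightarrow> real" where
  "Gamma2 g n x a b = (THE C. (\<forall>e\<ge>n. C e = 0) \<and>
        (\<forall>d<n. (\<Sum>e<n. C e * g x e d) = Gamma1 g a b d x))"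

text \<open>R(partial_a, partial_b, partial_c, partial_d) at x, with
  R(X,Y,Z,W) = g(nabla_X nabla_Y Z - nabla_Y nabla_X Z - nabla_[X,Y] Z, W)
  (coordinate fields commute).\<close>
definition curv :: "((nat \<Rightarrow> real) \<Rightarrow> nat \<Rightarrow> nat \<Rightarrow> real) \<Rightarrow> nat
                    \<Rightarrow> (nat \<Rightarrow> real) \<Rightarrow> nat \<Rightarrow> nat \<Rightarrow> nat \<Rightarrow> nat \<Rightarrow> real" where
  "curv g n x a b c d =
     (\<Sum>e<n. pd (\<lambda>y. Gamma2 g n y b c e) a x * g x e d
             + Gamma2 g n x b c e * Gamma1 g a e d x)
   - (\<Sum>e<n. pd (\<lambda>y. Gamma2 g n y a c e) b x * g x e d
             + Gamma2 g n x a c e * Gamma1 g b e d x)"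

definition model_ip :: "nat \<Rightarrow> (nat \<Rightarrow> real) \<Rightarrow> nat \<Rightarrow> nat \<Rightarrow> real" where
  "model_ip k eps a b =
     (if (a \<le> k \<and> b = a + k + 1) \<or> (b \<le> k \<and> a = b + k + 1) then 1
      else if a = b \<and> 2*k+2 \<le> a \<and> a < 3*k+2 then eps (a - (2*k+1))
      else 0)"

text \<open>Model curvature tensor on basis indices: the orbit of R(U_0,U_i,U_i,S_i) = 1
  under the symmetries of an algebraic curvature tensor; all other values 0.\<close>
definition model_R :: "nat \<Rightarrow> nat \<Rightarrow> nat \<Rightarrow> nat \<Rightarrow> nat \<Rightarrow> real" where
  "model_R k a b c d = (\<Sum>i\<in>{1..k}.
     (let s = 2*k+1+i in
       (if (a,b,c,d) = (0,i,i,s) then 1 else 0)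
     + (if (a,b,c,d) = (i,0,i,s) then -1 else 0)
     + (if (a,b,c,d) = (0,i,s,i) then -1 else 0)
     + (if (a,b,c,d) = (i,0,s,i) then 1 else 0)
     + (if (a,b,c,d) = (i,s,0,i) then 1 else 0)
     + (if (a,b,c,d) = (s,i,0,i) then -1 else 0)
     + (if (a,b,c,d) = (i,s,i,0) then -1 else 0)
     + (if (a,b,c,d) = (s,i,i,0) then 1 else 0)))"

definition bil :: "nat \<Rightarrow> (nat \<Rightarrow> nat \<Rightarrow> real) \<Rightarrow> (nat \<Rightarrow> real) \<Rightarrow> (nat \<Rightarrow> real) \<Rightarrow> real" where
  "bil n B v w = (\<Sum>a<n. \<Sum>b<n. B a b * v a * w b)"

definition quad4 :: "nat \<Rightarrow> (nat \<Rightarrow> nat \<Rightarrow> nat \<Rightarrow> nat \<Rightarrow> real)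
                     \<Rightarrow> (nat \<Rightarrow> real) \<Rightarrow> (nat \<Rightarrow> real) \<Rightarrow> (nat \<Rightarrow> real) \<Rightarrow> (nat \<Rightarrow> real) \<Rightarrow> real" where
  "quad4 n T v1 v2 v3 v4 =
     (\<Sum>a<n. \<Sum>b<n. \<Sum>c<n. \<Sum>d<n. T a b c d * v1 a * v2 b * v3 c * v4 d)"

definition mv :: "nat \<Rightarrow> (nat \<Rightarrow> nat \<Rightarrow> real) \<Rightarrow> (nat \<Rightarrow> real) \<Rightarrow> nat \<Rightarrow> real" where
  "mv n M v = (\<lambda>a. \<Sum>b<n. M a b * v b)"

definition invertible_mat :: "nat \<Rightarrow> (nat \<Rightarrow> nat \<Rightarrow> real) \<Rightarrow> bool" where
  "invertible_mat n M \<longleftrightarrow> (\<exists>N. \<forall>a<n. \<forall>b<n.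
      (\<Sum>c<n. M a c * N c b) = (if a = b then 1 else 0) \<and>
      (\<Sum>c<n. N a c * M c b) = (if a = b then 1 else 0))"

definition lin_indep_basis :: "nat \<Rightarrow> (nat \<Rightarrow> nat \<Rightarrow> real) \<Rightarrow> bool" where
  "lin_indep_basis n Bv \<longleftrightarrow>
     (\<forall>c. (\<forall>a<n. (\<Sum>j<n. c j * Bv j a) = 0) \<longrightarrow> (\<forall>j<n. c j = 0))"

end

theory Submission
  imports Defs
begin


definition dl :: "nat \<Rightarrow> nat \<Rightarrow> real" where
  "dl p a = (if a = p then 1 else 0)"

definition sym0 :: "nat \<Rightarrow> nat \<Rightarrow> nat \<Rightarrow> real" where
  "sym0 i b c = dl 0 b * dl i c + dl i b * dl 0 c"

definition phi :: "nat \<Rightarrow> (nat \<Rightarrow> real \<Rightarrow> real) \<Rightarrow> nat \<Rightarrow> (nat \<Rightarrow> real) \<Rightarrow> real" where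
  "phi k F i y = 2 * F i (y i) * y (2*k+1+i)"

definition psi :: "nat \<Rightarrow> nat \<Rightarrow> (nat \<Rightarrow> real) \<Rightarrow> real" where
  "psi k i y = -2 * y 0 * y (2*k+1+i)"

lemma sum_dl: "finite A \<Longrightarrow> (\<Sum>i\<in>A. dl i b * f i) = (if b \<in> A then f b else 0)"
  unfolding dl_def by (simp add: if_distrib[where f="\<lambda>x. x * _"] cong: if_cong)

lemma sum_sym0:
  "(\<Sum>i\<in>{1..k}. sym0 i a b * f i) =
     (if a = 0 \<and> 1 \<le> b \<and> b \<le> k then f b else 0) + (if b = 0 \<and> 1 \<le> a \<and> a \<le> k then f a else 0)"
proof -
  have "(\<Sum>i\<in>{1..k}. sym0 i a b * f i) = (\<Sum>i\<in>{1..k}. dl i b * (dl 0 a * f i)) + (\<Sum>i\<in>{1..k}. dl i a * (dl 0 b * f i))"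
    unfolding sym0_def by (simp add: algebra_simps sum.distrib)
  also have "\<dots> = (if a = 0 \<and> 1 \<le> b \<and> b \<le> k then f b else 0) + (if b = 0 \<and> 1 \<le> a \<and> a \<le> k then f a else 0)"
    by (simp add: sum_dl) (simp add: dl_def)
  finally show ?thesis .
qed

lemma sum_dd:
  "(\<Sum>i\<in>{1..k}. dl i a * dl i b * f i) = (if a = b \<and> 1 \<le> a \<and> a \<le> k then f a else 0)"
proof -
  have "(\<Sum>i\<in>{1..k}. dl i a * dl i b * f i) = (\<Sum>i\<in>{1..k}. dl i a * (dl i b * f i))"
    by (simp add: algebra_simps)
  also have "\<dots> = (if a = b \<and> 1 \<le> a \<and> a \<le> k then f a else 0)"
    by (simp add: sum_dl) (auto simp: dl_def)
  finally show ?thesis .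
qed

lemma gF_dec0:
  "gF k eps F y a b = gF k eps F (\<lambda>_. 0) a b +
     ((if a = 0 \<and> 1 \<le> b \<and> b \<le> k then phi k F b y else 0) + (if b = 0 \<and> 1 \<le> a \<and> a \<le> k then phi k F a y else 0)
       + (if a = b \<and> 1 \<le> a \<and> a \<le> k then psi k a y else 0))"
  proof (cases "a = 0 \<and> 1 \<le> b \<and> b \<le> k")
    case True then show ?thesis by (simp add: gF_def phi_def)
  next
    case n1: False
    show ?thesis
    proof (cases "b = 0 \<and> 1 \<le> a \<and> a \<le> k")
      case True then show ?thesis using n1 by (simp add: gF_def phi_def)
    next
      case n2: False
      show ?thesis
      proof (cases "a = b \<and> 1 \<le> a \<and> a \<le> k")
        case True then show ?thesis using n1 n2 by (simp add: gF_def psi_def)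
      next
        case n3: False
        have "gF k eps F y a b = gF k eps F (\<lambda>_. 0) a b"
          using n1 n2 n3 unfolding gF_def by (simp only: if_False)
        then show ?thesis using n1 n2 n3 by auto
      qed
    qed
  qed

lemma gF_dec:
  "gF k eps F y a b = gF k eps F (\<lambda>_. 0) a b +
     (\<Sum>i\<in>{1..k}. sym0 i a b * phi k F i y + dl i a * dl i b * psi k i y)"
  unfolding sum.distrib sum_sym0 sum_dd by (rule gF_dec0)


definition HD :: "((nat \<Rightarrow> real) \<Rightarrow> real) \<Rightarrow> nat \<Rightarrow> (nat \<Rightarrow> real) \<Rightarrow> real \<Rightarrow> bool" where
  "HD h a x D \<longleftrightarrow> ((\<lambda>t. h (x(a:=t))) has_real_derivative D) (at (x a))"

lemma pd_HD: "HD h a x D \<Longrightarrow> pd h a x = D"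
  unfolding HD_def pd_def by (rule DERIV_imp_deriv)

lemma HD_cong: "HD h a x D \<Longrightarrow> D = D' \<Longrightarrow> HD h a x D'"
  by simp

lemma HD_const: "HD (\<lambda>y. c) a x 0"
  unfolding HD_def by simp

lemma HD_coord: "HD (\<lambda>y. y p) a x (dl p a)"
proof (cases "p = a")
  case True
  have "(\<lambda>t. (x(a:=t)) p) = (\<lambda>t. t)" using True by auto
  then show ?thesis using True unfolding HD_def dl_def by simp
next
  case False
  have "(\<lambda>t. (x(a:=t)) p) = (\<lambda>t. x p)" using False by auto
  then show ?thesis using False unfolding HD_def dl_def by simp
qed

lemma HD_add: "HD f a x Df \<Longrightarrow> HD g a x Dg \<Longrightarrow> HD (\<lambda>y. f y + g y) a x (Df + Dg)"
  unfolding HD_def by (rule DERIV_add)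

lemma HD_diff: "HD f a x Df \<Longrightarrow> HD g a x Dg \<Longrightarrow> HD (\<lambda>y. f y - g y) a x (Df - Dg)"
  unfolding HD_def by (rule DERIV_diff)

lemma HD_mult: "HD f a x Df \<Longrightarrow> HD g a x Dg \<Longrightarrow> HD (\<lambda>y. f y * g y) a x (Df * g x + f x * Dg)"
  unfolding HD_def using DERIV_mult[of "\<lambda>t. f (x(a:=t))" Df "x a" UNIV "\<lambda>t. g (x(a:=t))" Dg]
  by (simp add: mult.commute)

lemma HD_cmult: "HD f a x D \<Longrightarrow> HD (\<lambda>y. c * f y) a x (c * D)"
  unfolding HD_def by (rule DERIV_cmult)

lemma HD_divide2: "HD f a x D \<Longrightarrow> HD (\<lambda>y. f y / 2) a x (D / 2)"
  unfolding HD_def by (rule DERIV_cdivide)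

lemma HD_sum: "finite S \<Longrightarrow> (\<And>i. i \<in> S \<Longrightarrow> HD (f i) a x (D i)) \<Longrightarrow> HD (\<lambda>y. \<Sum>i\<in>S. f i y) a x (\<Sum>i\<in>S. D i)"
  unfolding HD_def by (rule DERIV_sum) auto

lemma HD_comp: assumes "(G has_real_derivative G') (at (x p))" shows "HD (\<lambda>y. G (y p)) a x (G' * dl p a)"
proof (cases "p = a")
  case True
  have "(\<lambda>t. G ((x(a:=t)) p)) = G" using True by auto
  then show ?thesis using True assms unfolding HD_def dl_def by simp
next
  case False
  have "(\<lambda>t. G ((x(a:=t)) p)) = (\<lambda>t. G (x p))" using False by auto
  then show ?thesis using False unfolding HD_def dl_def by simp
qed


definition dphi :: "nat \<Rightarrow> (nat \<Rightarrow> real \<Rightarrow> real) \<Rightarrow> nat \<Rightarrow> nat \<Rightarrow> (nat \<Rightarrow> real) \<Rightarrow> real" where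
  "dphi k F i a y = 2 * (deriv (F i) (y i) * dl i a) * y (2*k+1+i) + 2 * F i (y i) * dl (2*k+1+i) a"

definition dpsi :: "nat \<Rightarrow> nat \<Rightarrow> nat \<Rightarrow> (nat \<Rightarrow> real) \<Rightarrow> real" where
  "dpsi k i a y = -2 * dl 0 a * y (2*k+1+i) + -2 * y 0 * dl (2*k+1+i) a"

definition dgS :: "nat \<Rightarrow> (nat \<Rightarrow> real \<Rightarrow> real) \<Rightarrow> nat \<Rightarrow> nat \<Rightarrow> nat \<Rightarrow> (nat \<Rightarrow> real) \<Rightarrow> real" where
  "dgS k F a b c y = (\<Sum>i\<in>{1..k}. sym0 i b c * dphi k F i a y + dl i b * dl i c * dpsi k i a y)"

definition ddphi :: "nat \<Rightarrow> (nat \<Rightarrow> real \<Rightarrow> real) \<Rightarrow> nat \<Rightarrow> nat \<Rightarrow> nat \<Rightarrow> (nat \<Rightarrow> real) \<Rightarrow> real" where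
  "ddphi k F i a' a y = 2 * ((deriv (deriv (F i)) (y i) * dl i a') * dl i a) * y (2*k+1+i)
      + 2 * (deriv (F i) (y i) * dl i a) * dl (2*k+1+i) a'
      + 2 * (deriv (F i) (y i) * dl i a') * dl (2*k+1+i) a"

definition ddpsi :: "nat \<Rightarrow> nat \<Rightarrow> nat \<Rightarrow> nat \<Rightarrow> real" where
  "ddpsi k i a' a = -2 * dl 0 a * dl (2*k+1+i) a' + -2 * dl 0 a' * dl (2*k+1+i) a"

definition ddgS :: "nat \<Rightarrow> (nat \<Rightarrow> real \<Rightarrow> real) \<Rightarrow> nat \<Rightarrow> nat \<Rightarrow> nat \<Rightarrow> nat \<Rightarrow> (nat \<Rightarrow> real) \<Rightarrow> real" where
  "ddgS k F a' a b c y = (\<Sum>i\<in>{1..k}. sym0 i b c * ddphi k F i a' a y + dl i b * dl i c * ddpsi k i a' a)"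

definition dG :: "nat \<Rightarrow> (nat \<Rightarrow> real \<Rightarrow> real) \<Rightarrow> nat \<Rightarrow> nat \<Rightarrow> nat \<Rightarrow> nat \<Rightarrow> (nat \<Rightarrow> real) \<Rightarrow> real" where
  "dG k F a b c d y = (ddgS k F a b c d y + ddgS k F a c b d y - ddgS k F a d b c y) / 2"

locale setting =
  fixes k :: nat and eps :: "nat \<Rightarrow> real" and F :: "nat \<Rightarrow> real \<Rightarrow> real"
  assumes dF: "\<And>i u. i \<in> {1..k} \<Longrightarrow> (F i has_real_derivative deriv (F i) u) (at u)"
    and ddF: "\<And>i u. i \<in> {1..k} \<Longrightarrow> (deriv (F i) has_real_derivative deriv (deriv (F i)) u) (at u)"
    and epsq: "\<And>i. i \<in> {1..k} \<Longrightarrow> eps i * eps i = 1"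
begin

lemma HD_phi: "i \<in> {1..k} \<Longrightarrow> HD (phi k F i) a x (dphi k F i a x)"
proof -
  assume i: "i \<in> {1..k}"
  have "HD (\<lambda>y. 2 * F i (y i) * y (2*k+1+i)) a x (dphi k F i a x)"
    unfolding dphi_def by (intro HD_mult HD_cmult HD_comp HD_coord dF i)
  then show ?thesis unfolding phi_def by simp
qed

lemma HD_psi: "HD (psi k i) a x (dpsi k i a x)"
proof -
  have "HD (\<lambda>y. -2 * y 0 * y (2*k+1+i)) a x (dpsi k i a x)"
    unfolding dpsi_def by (intro HD_mult HD_cmult HD_coord)
  then show ?thesis unfolding psi_def by simp
qed

lemma HD_gF: "HD (\<lambda>y. gF k eps F y b c) a x (dgS k F a b c x)"
proof -
  have e: "(\<lambda>y. gF k eps F y b c) = (\<lambda>y. gF k eps F (\<lambda>_. 0) b c +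
     (\<Sum>i\<in>{1..k}. sym0 i b c * phi k F i y + dl i b * dl i c * psi k i y))"
    by (rule ext, rule gF_dec)
  have "HD (\<lambda>y. gF k eps F (\<lambda>_. 0) b c +
     (\<Sum>i\<in>{1..k}. sym0 i b c * phi k F i y + dl i b * dl i c * psi k i y)) a x
     (0 + (\<Sum>i\<in>{1..k}. sym0 i b c * dphi k F i a x + dl i b * dl i c * dpsi k i a x))"
    by (intro HD_add HD_const HD_sum HD_cmult HD_phi HD_psi finite_atLeastAtMost) auto
  then show ?thesis unfolding e dgS_def by simp
qed

lemma pd_gF: "pd (\<lambda>y. gF k eps F y b c) a x = dgS k F a b c x"
  by (rule pd_HD[OF HD_gF])

lemma G1_eq: "Gamma1 (gF k eps F) b c d y = (dgS k F b c d y + dgS k F c b d y - dgS k F d b c y) / 2"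
  unfolding Gamma1_def pd_gF ..

lemma HD_dphi: "i \<in> {1..k} \<Longrightarrow> HD (dphi k F i a) a' x (ddphi k F i a' a x)"
proof -
  assume i: "i \<in> {1..k}"
  have "HD (\<lambda>y. 2 * (deriv (F i) (y i) * dl i a) * y (2*k+1+i) + 2 * F i (y i) * dl (2*k+1+i) a) a' x
     ((2 * ((deriv (deriv (F i)) (x i) * dl i a') * dl i a)) * x (2*k+1+i) + 2 * (deriv (F i) (x i) * dl i a) * dl (2*k+1+i) a'
      + (2 * (deriv (F i) (x i) * dl i a') * dl (2*k+1+i) a))"
  proof (intro HD_add)
    show "HD (\<lambda>y. 2 * (deriv (F i) (y i) * dl i a) * y (2*k+1+i)) a' x
      ((2 * ((deriv (deriv (F i)) (x i) * dl i a') * dl i a)) * x (2*k+1+i) + 2 * (deriv (F i) (x i) * dl i a) * dl (2*k+1+i) a')"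
    proof -
      have "HD (\<lambda>y. deriv (F i) (y i) * dl i a) a' x ((deriv (deriv (F i)) (x i) * dl i a') * dl i a + deriv (F i) (x i) * 0)"
        by (intro HD_mult HD_comp ddF i HD_const)
      then have "HD (\<lambda>y. deriv (F i) (y i) * dl i a) a' x ((deriv (deriv (F i)) (x i) * dl i a') * dl i a)" by simp
      then show ?thesis by (intro HD_mult HD_cmult HD_coord)
    qed
    show "HD (\<lambda>y. 2 * F i (y i) * dl (2*k+1+i) a) a' x (2 * (deriv (F i) (x i) * dl i a') * dl (2*k+1+i) a)"
    proof -
      have "HD (\<lambda>y. 2 * F i (y i) * dl (2*k+1+i) a) a' x (2 * (deriv (F i) (x i) * dl i a') * dl (2*k+1+i) a + 2 * F i (x i) * 0)"
        by (intro HD_mult HD_cmult HD_comp dF i HD_const)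
      then show ?thesis by simp
    qed
  qed
  then show ?thesis unfolding dphi_def ddphi_def by (simp add: algebra_simps)
qed

lemma HD_dpsi: "HD (dpsi k i a) a' x (ddpsi k i a' a)"
proof -
  have "HD (\<lambda>y. -2 * dl 0 a * y (2*k+1+i) + -2 * y 0 * dl (2*k+1+i) a) a' x
     ((-2 * dl 0 a) * dl (2*k+1+i) a' + ((-2 * dl 0 a') * dl (2*k+1+i) a + (-2 * x 0) * 0))"
    by (intro HD_add HD_cmult HD_coord HD_mult HD_const)
  then show ?thesis unfolding dpsi_def ddpsi_def by (simp add: algebra_simps)
qed

lemma HD_dgS: "HD (dgS k F a b c) a' x (ddgS k F a' a b c x)"
proof -
  have "HD (\<lambda>y. \<Sum>i\<in>{1..k}. sym0 i b c * dphi k F i a y + dl i b * dl i c * dpsi k i a y) a' x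
     (\<Sum>i\<in>{1..k}. sym0 i b c * ddphi k F i a' a x + dl i b * dl i c * ddpsi k i a' a)"
    by (intro HD_add HD_sum HD_cmult HD_dphi HD_dpsi finite_atLeastAtMost) auto
  then show ?thesis unfolding dgS_def ddgS_def by simp
qed

lemma HD_G1: "HD (\<lambda>y. Gamma1 (gF k eps F) b c d y) a x (dG k F a b c d x)"
proof -
  have "HD (\<lambda>y. (dgS k F b c d y + dgS k F c b d y - dgS k F d b c y) / 2) a x (dG k F a b c d x)"
    unfolding dG_def by (intro HD_divide2 HD_add HD_diff HD_dgS)
  then show ?thesis unfolding G1_eq .
qed

lemma pd_G1: "pd (\<lambda>y. Gamma1 (gF k eps F) b c d y) a x = dG k F a b c d x"
  by (rule pd_HD[OF HD_G1])

end


definition CX :: "nat \<Rightarrow> (nat \<Rightarrow> real) \<Rightarrow> (nat \<Rightarrow> real) \<Rightarrow> nat \<Rightarrow> real" where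
  "CX k eps h e = (if k+1 \<le> e \<and> e \<le> 2*k+1 then h (e - (k+1))
     else if 2*k+2 \<le> e \<and> e < 3*k+2 then eps (e - (2*k+1)) * h e else 0)"

context setting begin

lemma dl_v: "k+1 \<le> e \<Longrightarrow> e \<le> 2*k+1 \<Longrightarrow> i \<in> {1..k} \<Longrightarrow> dl i e = 0 \<and> dl 0 e = 0 \<and> dl (2*k+1+i) e = 0"
  unfolding dl_def by auto

lemma dgS_v:
  assumes "k+1 \<le> e" "e \<le> 2*k+1"
  shows "dgS k F e b c y = 0" "dgS k F a e c y = 0" "dgS k F a b e y = 0"
  unfolding dgS_def
  using assms by (auto simp: sym0_def dphi_def dpsi_def dl_def intro!: sum.neutral)

lemma ddgS_v:
  assumes "k+1 \<le> e" "e \<le> 2*k+1"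
  shows "ddgS k F a' e b c y = 0" "ddgS k F a' a e c y = 0" "ddgS k F a' a b e y = 0"
  unfolding ddgS_def
  using assms by (auto simp: sym0_def ddphi_def ddpsi_def dl_def intro!: sum.neutral)

lemma G1_v:
  assumes "k+1 \<le> e" "e \<le> 2*k+1"
  shows "Gamma1 (gF k eps F) b c e y = 0" "Gamma1 (gF k eps F) a e c y = 0"
  unfolding G1_eq by (simp_all add: dgS_v[OF assms])

lemma dG_v:
  assumes "k+1 \<le> e" "e \<le> 2*k+1"
  shows "dG k F a b c e y = 0"
  unfolding dG_def by (simp add: ddgS_v[OF assms])

lemma g_v: "k+1 \<le> e \<Longrightarrow> e \<le> 2*k+1 \<Longrightarrow> gF k eps F y e d = (if e = d+k+1 then 1 else 0)"
  unfolding gF_def by auto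

lemma g_s: "2*k+2 \<le> e \<Longrightarrow> e < 3*k+2 \<Longrightarrow> gF k eps F y e d = (if d = e then eps (e - (2*k+1)) else 0)"
  unfolding gF_def by auto

lemma g_u: "d \<le> k \<Longrightarrow> gF k eps F y e (d+k+1) = (if e = d then 1 else 0)"
  unfolding gF_def by auto

lemma eps_s: "2*k+2 \<le> e \<Longrightarrow> e < 3*k+2 \<Longrightarrow> eps (e - (2*k+1)) * eps (e - (2*k+1)) = 1"
  by (rule epsq) auto

lemma CX_sum:
  assumes d: "d < 3*k+2" and hv: "\<And>j. k+1 \<le> j \<Longrightarrow> j \<le> 2*k+1 \<Longrightarrow> h j = 0"
  shows "(\<Sum>e<3*k+2. CX k eps h e * gF k eps F y e d) = h d"
proof -
  have pw: "CX k eps h e * gF k eps F y e d =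
      (if d \<le> k then (if e = d+k+1 then h d else 0) else 0) + (if 2*k+2 \<le> d then (if e = d then h d else 0) else 0)"
    if e: "e < 3*k+2" for e
  proof (cases "k+1 \<le> e \<and> e \<le> 2*k+1")
    case True
    then show ?thesis unfolding CX_def using g_v[of e y d] by auto
  next
    case nv: False
    show ?thesis
    proof (cases "2*k+2 \<le> e")
      case True
      then show ?thesis unfolding CX_def using g_s[of e y d] eps_s[of e] nv e by auto
    next
      case False
      then show ?thesis unfolding CX_def using nv by auto
    qed
  qed
  have "(\<Sum>e<3*k+2. CX k eps h e * gF k eps F y e d) =
     (\<Sum>e<3*k+2. (if d \<le> k then (if e = d+k+1 then h d else 0) else 0) + (if 2*k+2 \<le> d then (if e = d then h d else 0) else 0))"
    by (rule sum.cong) (auto simp: pw)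
  also have "\<dots> = (if d \<le> k then h d else 0) + (if 2*k+2 \<le> d then h d else 0)"
    using d by (simp add: sum.distrib)
  also have "\<dots> = h d"
    using d hv[of d] by auto
  finally show ?thesis .
qed

lemma G2_eq: "Gamma2 (gF k eps F) (3*k+2) y b c = CX k eps (\<lambda>d. Gamma1 (gF k eps F) b c d y)"
  unfolding Gamma2_def
proof (rule the_equality)
  show "(\<forall>e\<ge>3*k+2. CX k eps (\<lambda>d. Gamma1 (gF k eps F) b c d y) e = 0) \<and>
    (\<forall>d<3*k+2. (\<Sum>e<3*k+2. CX k eps (\<lambda>d. Gamma1 (gF k eps F) b c d y) e * gF k eps F y e d) =
       Gamma1 (gF k eps F) b c d y)"
  proof (intro conjI allI impI)
    fix e :: nat assume "e \<ge> 3*k+2"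
    then show "CX k eps (\<lambda>d. Gamma1 (gF k eps F) b c d y) e = 0" unfolding CX_def by auto
  next
    fix d :: nat assume "d < 3*k+2"
    then show "(\<Sum>e<3*k+2. CX k eps (\<lambda>d. Gamma1 (gF k eps F) b c d y) e * gF k eps F y e d) =
       Gamma1 (gF k eps F) b c d y"
      by (intro CX_sum) (auto intro: G1_v)
  qed
next
  fix C
  assume "(\<forall>e\<ge>3*k+2. C e = 0) \<and>
    (\<forall>d<3*k+2. (\<Sum>e<3*k+2. C e * gF k eps F y e d) = Gamma1 (gF k eps F) b c d y)"
  then have C0: "\<And>e. e \<ge> 3*k+2 \<Longrightarrow> C e = 0"
    and CS: "\<And>d. d < 3*k+2 \<Longrightarrow> (\<Sum>e<3*k+2. C e * gF k eps F y e d) = Gamma1 (gF k eps F) b c d y"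
    by auto
  have Cu: "C e = 0" if e: "e \<le> k" for e
  proof -
    have "(\<Sum>e'<3*k+2. C e' * gF k eps F y e' (e+k+1)) = (\<Sum>e'<3*k+2. if e' = e then C e else 0)"
      by (rule sum.cong) (use g_u[OF e, of y] in auto)
    also have "\<dots> = C e" using e by simp
    finally have "C e = Gamma1 (gF k eps F) b c (e+k+1) y" using CS[of "e+k+1"] e by simp
    then show ?thesis using G1_v(1)[of "e+k+1"] e by simp
  qed
  show "C = CX k eps (\<lambda>d. Gamma1 (gF k eps F) b c d y)"
  proof
    fix e
    show "C e = CX k eps (\<lambda>d. Gamma1 (gF k eps F) b c d y) e"
    proof (cases "e \<le> k")
      case True then show ?thesis using Cu unfolding CX_def by auto
    next
      case nu: False
      show ?thesis
      proof (cases "e \<le> 2*k+1")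
        case True
        define j where "j = e - (k+1)"
        have j: "j \<le> k" "e = j+k+1" using True nu unfolding j_def by auto
        have "(\<Sum>e'<3*k+2. C e' * gF k eps F y e' j) = (\<Sum>e'<3*k+2. if e' = e then C e else 0)"
        proof (rule sum.cong)
          fix e' assume e': "e' \<in> {..<3*k+2}"
          show "C e' * gF k eps F y e' j = (if e' = e then C e else 0)"
          proof (cases "e' \<le> k")
            case True then show ?thesis using Cu[OF True] j by auto
          next
            case False
            then show ?thesis using g_v[of e' y j] g_s[of e' y j] e' j by (cases "e' \<le> 2*k+1") auto
          qed
        qed simp
        also have "\<dots> = C e" using j by simp
        finally have "C e = Gamma1 (gF k eps F) b c j y" using CS[of j] j by simp
        then show ?thesis using j nu unfolding CX_def by auto
      next
        case nv: False
        show ?thesis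
        proof (cases "e < 3*k+2")
          case True
          have "(\<Sum>e'<3*k+2. C e' * gF k eps F y e' e) = (\<Sum>e'<3*k+2. if e' = e then C e * eps (e - (2*k+1)) else 0)"
          proof (rule sum.cong)
            fix e' assume e': "e' \<in> {..<3*k+2}"
            show "C e' * gF k eps F y e' e = (if e' = e then C e * eps (e - (2*k+1)) else 0)"
            proof (cases "e' \<le> k")
              case True then show ?thesis using Cu[OF True] nu by auto
            next
              case False
              then show ?thesis using g_v[of e' y e] g_s[of e' y e] e' nv by (cases "e' \<le> 2*k+1") auto
            qed
          qed simp
          also have "\<dots> = C e * eps (e - (2*k+1))" using True by simp
          finally have "C e * eps (e - (2*k+1)) = Gamma1 (gF k eps F) b c e y" using CS[of e] True by simp
          then have ce: "C e * eps (e - (2*k+1)) = Gamma1 (gF k eps F) b c e y" .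
          have q: "eps (e - (2*k+1)) * eps (e - (2*k+1)) = 1" using eps_s[of e] True nv by simp
          have "C e = C e * (eps (e - (2*k+1)) * eps (e - (2*k+1)))" by (simp only: q mult_1_right)
          also have "\<dots> = eps (e - (2*k+1)) * (C e * eps (e - (2*k+1)))" by (simp add: algebra_simps)
          also have "\<dots> = eps (e - (2*k+1)) * Gamma1 (gF k eps F) b c e y" by (simp only: ce)
          finally have "C e = eps (e - (2*k+1)) * Gamma1 (gF k eps F) b c e y" .
          then show ?thesis using True nv nu unfolding CX_def by auto
        next
          case False
          then show ?thesis using C0 unfolding CX_def by auto
        qed
      qed
    qed
  qed
qed

end


lemma sum_s: fixes k :: nat shows "(\<Sum>e<3*k+2. (if 2*k+2 \<le> e then f e else 0)) = (\<Sum>i\<in>{1..k}. f (2*k+1+i)) "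
proof -
  have "(\<Sum>e<3*k+2. (if 2*k+2 \<le> e then f e else 0)) = (\<Sum>e\<in>{e\<in>{..<3*k+2}. 2*k+2 \<le> e}. f e)"
    by (rule sum.inter_filter[symmetric]) simp
  also have "{e\<in>{..<3*k+2}. 2*k+2 \<le> e} = (\<lambda>i. 2*k+1+i) ` {1..k}"
  proof
    show "{e\<in>{..<3*k+2}. 2*k+2 \<le> e} \<subseteq> (\<lambda>i. 2*k+1+i) ` {1..k}"
    proof
      fix e assume "e \<in> {e\<in>{..<3*k+2}. 2*k+2 \<le> e}"
      then have "e - (2*k+1) \<in> {1..k}" "e = 2*k+1+(e - (2*k+1))" by auto
      then show "e \<in> (\<lambda>i. 2*k+1+i) ` {1..k}" by blast
    qed
  qed auto
  also have "(\<Sum>e\<in>(\<lambda>i. 2*k+1+i) ` {1..k}. f e) = (\<Sum>i\<in>{1..k}. f (2*k+1+i))"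
    by (rule sum.reindex_cong[where l="\<lambda>i. 2*k+1+i"]) (auto simp: inj_on_def)
  finally show ?thesis .
qed

context setting begin

lemma pd_G2: "pd (\<lambda>y. Gamma2 (gF k eps F) (3*k+2) y b c e) a x = CX k eps (\<lambda>d. dG k F a b c d x) e"
proof -
  have e1: "(\<lambda>y. Gamma2 (gF k eps F) (3*k+2) y b c e) = (\<lambda>y. CX k eps (\<lambda>d. Gamma1 (gF k eps F) b c d y) e)"
    by (simp only: G2_eq)
  show ?thesis
  proof (cases "k+1 \<le> e \<and> e \<le> 2*k+1")
    case True
    then have "(\<lambda>y. CX k eps (\<lambda>d. Gamma1 (gF k eps F) b c d y) e) = (\<lambda>y. Gamma1 (gF k eps F) b c (e - (k+1)) y)"
      unfolding CX_def by simp
    then show ?thesis unfolding e1 using True by (simp add: pd_G1 CX_def)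
  next
    case nv: False
    show ?thesis
    proof (cases "2*k+2 \<le> e \<and> e < 3*k+2")
      case True
      then have "(\<lambda>y. CX k eps (\<lambda>d. Gamma1 (gF k eps F) b c d y) e) = (\<lambda>y. eps (e - (2*k+1)) * Gamma1 (gF k eps F) b c e y)"
        using nv unfolding CX_def by simp
      then show ?thesis unfolding e1 using True nv pd_HD[OF HD_cmult[OF HD_G1]] by (simp add: CX_def)
    next
      case False
      have h1: "(\<lambda>y. CX k eps (\<lambda>d. Gamma1 (gF k eps F) b c d y) e) = (\<lambda>y. 0)"
        unfolding CX_def by (simp only: nv False if_False)
      have h2: "CX k eps (\<lambda>d. dG k F a b c d x) e = 0"
        unfolding CX_def by (simp only: nv False if_False)
      show ?thesis unfolding e1 h1 h2 by (rule pd_HD[OF HD_const])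
    qed
  qed
qed

lemma quad_sum: "(\<Sum>e<3*k+2. CX k eps (\<lambda>d. Gamma1 (gF k eps F) b c d x) e * Gamma1 (gF k eps F) a e d x)
   = (\<Sum>i\<in>{1..k}. eps i * Gamma1 (gF k eps F) b c (2*k+1+i) x * Gamma1 (gF k eps F) a (2*k+1+i) d x)"
proof -
  have "(\<Sum>e<3*k+2. CX k eps (\<lambda>d. Gamma1 (gF k eps F) b c d x) e * Gamma1 (gF k eps F) a e d x)
     = (\<Sum>e<3*k+2. (if 2*k+2 \<le> e then eps (e - (2*k+1)) * Gamma1 (gF k eps F) b c e x * Gamma1 (gF k eps F) a e d x else 0))"
  proof (rule sum.cong)
    fix e assume e: "e \<in> {..<3*k+2}"
    show "CX k eps (\<lambda>d. Gamma1 (gF k eps F) b c d x) e * Gamma1 (gF k eps F) a e d x =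
      (if 2*k+2 \<le> e then eps (e - (2*k+1)) * Gamma1 (gF k eps F) b c e x * Gamma1 (gF k eps F) a e d x else 0)"
      using e G1_v(2)[of e a d x] unfolding CX_def by auto
  qed simp
  also have "\<dots> = (\<Sum>i\<in>{1..k}. eps i * Gamma1 (gF k eps F) b c (2*k+1+i) x * Gamma1 (gF k eps F) a (2*k+1+i) d x)"
    by (subst sum_s) simp
  finally show ?thesis .
qed

lemma curv_eq:
  assumes d: "d < 3*k+2"
  shows "curv (gF k eps F) (3*k+2) x a b c d = dG k F a b c d x - dG k F b a c d x
    + (\<Sum>i\<in>{1..k}. eps i * (Gamma1 (gF k eps F) b c (2*k+1+i) x * Gamma1 (gF k eps F) a (2*k+1+i) d x
                           - Gamma1 (gF k eps F) a c (2*k+1+i) x * Gamma1 (gF k eps F) b (2*k+1+i) d x))"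
proof -
  have s1: "(\<Sum>e<3*k+2. pd (\<lambda>y. Gamma2 (gF k eps F) (3*k+2) y b c e) a x * gF k eps F x e d) = dG k F a b c d x"
    for a b c
    unfolding pd_G2 by (rule CX_sum[OF d]) (rule dG_v)
  have s2: "(\<Sum>e<3*k+2. Gamma2 (gF k eps F) (3*k+2) x b c e * Gamma1 (gF k eps F) a e d x)
     = (\<Sum>i\<in>{1..k}. eps i * Gamma1 (gF k eps F) b c (2*k+1+i) x * Gamma1 (gF k eps F) a (2*k+1+i) d x)" for a b c
    unfolding G2_eq by (rule quad_sum)
  show ?thesis
    unfolding curv_def sum.distrib s1 s2
    by (simp add: sum_subtractf[symmetric] algebra_simps)
qed

end


definition Ai :: "nat \<Rightarrow> nat \<Rightarrow> nat \<Rightarrow> real" where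
  "Ai i a b = dl 0 a * dl i b - dl i a * dl 0 b"
definition Bi :: "nat \<Rightarrow> nat \<Rightarrow> nat \<Rightarrow> nat \<Rightarrow> real" where
  "Bi k i a b = dl i a * dl (2*k+1+i) b - dl (2*k+1+i) a * dl i b"

definition Tt :: "nat \<Rightarrow> (nat \<Rightarrow> real \<Rightarrow> real) \<Rightarrow> nat \<Rightarrow> nat \<Rightarrow> nat \<Rightarrow> nat \<Rightarrow> nat \<Rightarrow> (nat \<Rightarrow> real) \<Rightarrow> real" where
  "Tt k F i a' a b c y = sym0 i b c * ddphi k F i a' a y + dl i b * dl i c * ddpsi k i a' a"

definition Lt :: "nat \<Rightarrow> (nat \<Rightarrow> real \<Rightarrow> real) \<Rightarrow> nat \<Rightarrow> nat \<Rightarrow> nat \<Rightarrow> nat \<Rightarrow> nat \<Rightarrow> (nat \<Rightarrow> real) \<Rightarrow> real" where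
  "Lt k F i a b c d y = (Tt k F i a b c d y + Tt k F i a c b d y - Tt k F i a d b c y
      - (Tt k F i b a c d y + Tt k F i b c a d y - Tt k F i b d a c y)) / 2"

definition R0 :: "nat \<Rightarrow> (nat \<Rightarrow> real) \<Rightarrow> (nat \<Rightarrow> real \<Rightarrow> real) \<Rightarrow> (nat \<Rightarrow> real) \<Rightarrow> nat \<Rightarrow> nat \<Rightarrow> nat \<Rightarrow> nat \<Rightarrow> real" where
  "R0 k eps F x a b c d = (\<Sum>i\<in>{1..k}. (1 + deriv (F i) (x i)) * (Ai i a b * Bi k i c d + Bi k i a b * Ai i c d)
       + eps i * (F i (x i))^2 * (- (Ai i a b * Ai i c d)))"

lemma idx4: "x = (0::nat) \<or> x = i \<or> x = s \<or> (x \<noteq> 0 \<and> x \<noteq> i \<and> x \<noteq> s)" by auto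

lemma per_i:
  assumes i: "1 \<le> i" "i \<le> k"
  shows "Lt k F i a b c d x + ep * ((- fi * sym0 i b c + y0 * (dl i b * dl i c)) * (fi * sym0 i a d - y0 * (dl i a * dl i d))
      - (- fi * sym0 i a c + y0 * (dl i a * dl i c)) * (fi * sym0 i b d - y0 * (dl i b * dl i d)))
    = (1 + deriv (F i) (x i)) * (Ai i a b * Bi k i c d + Bi k i a b * Ai i c d)
       + ep * fi^2 * (- (Ai i a b * Ai i c d))"
proof -
  define s where "s = 2*k+1+i"
  have d: "i \<noteq> 0" "s \<noteq> 0" "s \<noteq> i" "i \<noteq> s" "0 \<noteq> s" "0 \<noteq> i" using i unfolding s_def by auto
  show ?thesis
    unfolding Lt_def Tt_def ddphi_def ddpsi_def Ai_def Bi_def sym0_def s_def[symmetric]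
    using idx4[of a i s] idx4[of b i s] idx4[of c i s] idx4[of d i s]
    apply (elim disjE)
    apply (simp_all add: dl_def d)
    apply (simp_all add: algebra_simps power2_eq_square)
    done
qed


context setting begin

lemma G1_s1:
  assumes i: "i \<in> {1..k}"
  shows "Gamma1 (gF k eps F) b c (2*k+1+i) y = - F i (y i) * sym0 i b c + y 0 * (dl i b * dl i c)"
proof -
  have z1: "dgS k F b c (2*k+1+i) y = 0" "dgS k F c b (2*k+1+i) y = 0"
    unfolding dgS_def using i by (auto simp: sym0_def dl_def intro!: sum.neutral)
  have "dgS k F (2*k+1+i) b c y = (\<Sum>j\<in>{1..k}. dl j i * (2 * F j (y j) * sym0 j b c - 2 * y 0 * (dl j b * dl j c)))"
    unfolding dgS_def dphi_def dpsi_def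
    by (rule sum.cong) (auto simp: dl_def)
  also have "\<dots> = 2 * F i (y i) * sym0 i b c - 2 * y 0 * (dl i b * dl i c)"
    using i by (simp add: sum_dl)
  finally show ?thesis unfolding G1_eq z1 by simp
qed

lemma G1_s2:
  assumes i: "i \<in> {1..k}"
  shows "Gamma1 (gF k eps F) a (2*k+1+i) d y = F i (y i) * sym0 i a d - y 0 * (dl i a * dl i d)"
proof -
  have z1: "dgS k F a (2*k+1+i) d y = 0" "dgS k F d a (2*k+1+i) y = 0"
    unfolding dgS_def using i by (auto simp: sym0_def dl_def intro!: sum.neutral)
  have "dgS k F (2*k+1+i) a d y = (\<Sum>j\<in>{1..k}. dl j i * (2 * F j (y j) * sym0 j a d - 2 * y 0 * (dl j a * dl j d)))"
    unfolding dgS_def dphi_def dpsi_def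
    by (rule sum.cong) (auto simp: dl_def)
  also have "\<dots> = 2 * F i (y i) * sym0 i a d - 2 * y 0 * (dl i a * dl i d)"
    using i by (simp add: sum_dl)
  finally show ?thesis unfolding G1_eq z1 by simp
qed

lemma dG_diff: "dG k F a b c d x - dG k F b a c d x = (\<Sum>i\<in>{1..k}. Lt k F i a b c d x)"
  unfolding dG_def ddgS_def Lt_def Tt_def
  by (simp add: sum.distrib sum_subtractf sum_divide_distrib[symmetric] diff_divide_distrib)

lemma curv_R0:
  assumes d: "d < 3*k+2"
  shows "curv (gF k eps F) (3*k+2) x a b c d = R0 k eps F x a b c d"
proof -
  have "curv (gF k eps F) (3*k+2) x a b c d = (\<Sum>i\<in>{1..k}. Lt k F i a b c d x) +
    (\<Sum>i\<in>{1..k}. eps i * ((- F i (x i) * sym0 i b c + x 0 * (dl i b * dl i c)) * (F i (x i) * sym0 i a d - x 0 * (dl i a * dl i d))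
      - (- F i (x i) * sym0 i a c + x 0 * (dl i a * dl i c)) * (F i (x i) * sym0 i b d - x 0 * (dl i b * dl i d))))"
    unfolding curv_eq[OF d] dG_diff
  proof (intro arg_cong2[where f="(+)"] refl sum.cong)
    fix i assume i: "i \<in> {1..k}"
    show "eps i * (Gamma1 (gF k eps F) b c (2*k+1+i) x * Gamma1 (gF k eps F) a (2*k+1+i) d x
             - Gamma1 (gF k eps F) a c (2*k+1+i) x * Gamma1 (gF k eps F) b (2*k+1+i) d x) =
      eps i * ((- F i (x i) * sym0 i b c + x 0 * (dl i b * dl i c)) * (F i (x i) * sym0 i a d - x 0 * (dl i a * dl i d))
      - (- F i (x i) * sym0 i a c + x 0 * (dl i a * dl i c)) * (F i (x i) * sym0 i b d - x 0 * (dl i b * dl i d)))"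
      unfolding G1_s1[OF i] G1_s2[OF i] ..
  qed
  also have "\<dots> = R0 k eps F x a b c d"
    unfolding R0_def sum.distrib[symmetric]
  proof (rule sum.cong)
    fix i assume i: "i \<in> {1..k}"
    then show "Lt k F i a b c d x +
    eps i * ((- F i (x i) * sym0 i b c + x 0 * (dl i b * dl i c)) * (F i (x i) * sym0 i a d - x 0 * (dl i a * dl i d))
      - (- F i (x i) * sym0 i a c + x 0 * (dl i a * dl i c)) * (F i (x i) * sym0 i b d - x 0 * (dl i b * dl i d)))
     = (1 + deriv (F i) (x i)) * (Ai i a b * Bi k i c d + Bi k i a b * Ai i c d)
       + eps i * (F i (x i))^2 * (- (Ai i a b * Ai i c d))"
      by (intro per_i) auto
  qed simp
  finally show ?thesis .
qed

end


definition rep :: "nat \<Rightarrow> (nat \<Rightarrow> nat \<Rightarrow> real) \<Rightarrow> ((nat \<Rightarrow> real) \<Rightarrow> nat \<Rightarrow> real) \<Rightarrow> bool" where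
  "rep n M f \<longleftrightarrow> (\<forall>v. \<forall>a<n. mv n M v a = f v a)"

definition loc :: "nat \<Rightarrow> ((nat \<Rightarrow> real) \<Rightarrow> nat \<Rightarrow> real) \<Rightarrow> bool" where
  "loc n f \<longleftrightarrow> (\<forall>u v. (\<forall>x<n. u x = v x) \<longrightarrow> (\<forall>a<n. f u a = f v a))"

definition lin :: "nat \<Rightarrow> ((nat \<Rightarrow> real) \<Rightarrow> nat \<Rightarrow> real) \<Rightarrow> bool" where
  "lin n f \<longleftrightarrow> (\<forall>u v. \<forall>a<n. f (\<lambda>x. u x + v x) a = f u a + f v a) \<and> (\<forall>c u. \<forall>a<n. f (\<lambda>x. c * u x) a = c * f u a)"

definition ev :: "nat \<Rightarrow> nat \<Rightarrow> real" where
  "ev b x = (if x = b then 1 else 0)"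

definition mm :: "nat \<Rightarrow> (nat \<Rightarrow> nat \<Rightarrow> real) \<Rightarrow> (nat \<Rightarrow> nat \<Rightarrow> real) \<Rightarrow> nat \<Rightarrow> nat \<Rightarrow> real" where
  "mm n A B a b = (\<Sum>c<n. A a c * B c b)"

lemma sum_ev1: "b < n \<Longrightarrow> (\<Sum>x<n. ev b x * f x) = f b"
  unfolding ev_def by (simp add: if_distrib[where f="\<lambda>x. x * _"] cong: if_cong)

lemma sum_ev2: "b < n \<Longrightarrow> (\<Sum>x<n. f x * ev b x) = f b"
  unfolding ev_def by (simp add: if_distrib[where f="\<lambda>x. _ * x"] cong: if_cong)

lemma sum_ev3: "x < n \<Longrightarrow> (\<Sum>b<n. v b * ev b x) = v x"
  unfolding ev_def by (simp add: if_distrib[where f="\<lambda>x. _ * x"] cong: if_cong)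

lemma lin_zero: "lin n f \<Longrightarrow> a < n \<Longrightarrow> f (\<lambda>x. 0) a = 0"
proof -
  assume "lin n f" "a < n"
  then have h: "\<forall>c u. f (\<lambda>x. c * u x) a = c * f u a" unfolding lin_def by blast
  show ?thesis using spec[OF spec[OF h, of 0], of "\<lambda>x. 0"] by simp
qed

lemma lin_sum: assumes "finite S" "lin n f" "a < n" shows "f (\<lambda>x. \<Sum>b\<in>S. v b * ev b x) a = (\<Sum>b\<in>S. v b * f (ev b) a)"
  using assms(1)
proof (induction S rule: finite_induct)
  case empty then show ?case using lin_zero[OF assms(2,3)] by simp
next
  case (insert b S)
  have add: "\<And>u w. f (\<lambda>x. u x + w x) a = f u a + f w a" and mul: "\<And>c u. f (\<lambda>x. c * u x) a = c * f u a"
    using assms(2,3) unfolding lin_def by blast+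
  have "f (\<lambda>x. \<Sum>b\<in>insert b S. v b * ev b x) a = f (\<lambda>x. v b * ev b x + (\<Sum>b\<in>S. v b * ev b x)) a"
    using insert by simp
  also have "\<dots> = f (\<lambda>x. v b * ev b x) a + f (\<lambda>x. \<Sum>b\<in>S. v b * ev b x) a"
    by (rule add)
  also have "\<dots> = v b * f (ev b) a + (\<Sum>b\<in>S. v b * f (ev b) a)"
    using insert mul[of "v b" "ev b"] by simp
  finally show ?case using insert by simp
qed

lemma loc_D: assumes "loc n f" "\<And>x. x < n \<Longrightarrow> u x = v x" "a < n" shows "f u a = f v a"
proof -
  have "\<forall>x<n. u x = v x" using assms(2) by blast
  then show ?thesis using assms(1,3) unfolding loc_def by blast
qed

lemma rep_lin: assumes "lin n f" "loc n f" shows "rep n (\<lambda>a b. f (ev b) a) f"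
  unfolding rep_def mv_def
proof (intro allI impI)
  fix v :: "nat \<Rightarrow> real" and a assume a: "a < n"
  have "(\<Sum>b<n. f (ev b) a * v b) = f (\<lambda>x. \<Sum>b<n. v b * ev b x) a"
    using lin_sum[OF _ assms(1) a, of "{..<n}" v] by (simp add: mult.commute)
  also have "\<dots> = f v a"
    by (rule loc_D[OF assms(2) _ a]) (simp add: sum_ev3)
  finally show "(\<Sum>b<n. f (ev b) a * v b) = f v a" .
qed

lemma mv_ev: "b < n \<Longrightarrow> mv n N (ev b) c = N c b"
  unfolding mv_def by (rule sum_ev2)

lemma rep_mm: assumes A: "rep n A f" and B: "rep n B g" and lf: "loc n f"
  shows "rep n (mm n A B) (\<lambda>v. f (g v))"
  unfolding rep_def
proof (intro allI impI)
  fix v :: "nat \<Rightarrow> real" and a assume a: "a < n"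
  have "mv n (mm n A B) v a = mv n A (mv n B v) a"
  proof -
    have "mv n (mm n A B) v a = (\<Sum>b<n. \<Sum>c<n. A a c * (B c b * v b))"
      unfolding mv_def mm_def sum_distrib_right by (simp add: mult.assoc)
    also have "\<dots> = (\<Sum>c<n. \<Sum>b<n. A a c * (B c b * v b))" by (rule sum.swap)
    also have "\<dots> = mv n A (mv n B v) a" unfolding mv_def sum_distrib_left ..
    finally show ?thesis .
  qed
  also have "\<dots> = f (mv n B v) a" using A a unfolding rep_def by blast
  also have "\<dots> = f (g v) a" using B by (intro loc_D[OF lf _ a]) (simp add: rep_def)
  finally show "mv n (mm n A B) v a = f (g v) a" .
qed

lemma inv_rep: assumes M: "rep n M f" and N: "rep n N g" and lf: "loc n f" and lg: "loc n g"
  and fg: "\<And>w a. a < n \<Longrightarrow> f (g w) a = w a" and gf: "\<And>v a. a < n \<Longrightarrow> g (f v) a = v a"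
  shows "invertible_mat n M"
  unfolding invertible_mat_def
proof (intro exI[of _ N] allI impI conjI)
  fix a b assume a: "a < n" and b: "b < n"
  have "(\<Sum>c<n. M a c * N c b) = mv n M (\<lambda>c. N c b) a" unfolding mv_def ..
  also have "\<dots> = f (\<lambda>c. N c b) a" using M a unfolding rep_def by blast
  also have "\<dots> = f (g (ev b)) a"
  proof (rule loc_D[OF lf _ a])
    fix x assume "x < n"
    then have "mv n N (ev b) x = g (ev b) x" using N unfolding rep_def by blast
    then show "N x b = g (ev b) x" using mv_ev[OF b, of N x] by simp
  qed
  also have "\<dots> = ev b a" using fg a .
  finally show "(\<Sum>c<n. M a c * N c b) = (if a = b then 1 else 0)" by (simp add: ev_def)
  have "(\<Sum>c<n. N a c * M c b) = mv n N (\<lambda>c. M c b) a" unfolding mv_def ..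
  also have "\<dots> = g (\<lambda>c. M c b) a" using N a unfolding rep_def by blast
  also have "\<dots> = g (f (ev b)) a"
  proof (rule loc_D[OF lg _ a])
    fix x assume "x < n"
    then have "mv n M (ev b) x = f (ev b) x" using M unfolding rep_def by blast
    then show "M x b = f (ev b) x" using mv_ev[OF b, of M x] by simp
  qed
  also have "\<dots> = ev b a" using gf a .
  finally show "(\<Sum>c<n. N a c * M c b) = (if a = b then 1 else 0)" by (simp add: ev_def)
qed



lemma bil_cong: assumes "\<And>x. x < n \<Longrightarrow> v x = v' x" "\<And>x. x < n \<Longrightarrow> w x = w' x" shows "bil n B v w = bil n B v' w'"
  unfolding bil_def by (rule sum.cong[OF refl], rule sum.cong[OF refl]) (simp add: assms)

lemma quad4_cong: assumes "\<And>x. x < n \<Longrightarrow> v1 x = v1' x" "\<And>x. x < n \<Longrightarrow> v2 x = v2' x"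
  "\<And>x. x < n \<Longrightarrow> v3 x = v3' x" "\<And>x. x < n \<Longrightarrow> v4 x = v4' x" shows
  "quad4 n T v1 v2 v3 v4 = quad4 n T v1' v2' v3' v4'"
  unfolding quad4_def by (rule sum.cong[OF refl], rule sum.cong[OF refl], rule sum.cong[OF refl], rule sum.cong[OF refl]) (simp add: assms)

lemma quad4_congT: assumes "\<And>a b c d. a < n \<Longrightarrow> b < n \<Longrightarrow> c < n \<Longrightarrow> d < n \<Longrightarrow> T a b c d = T' a b c d" shows
  "quad4 n T v1 v2 v3 v4 = quad4 n T' v1 v2 v3 v4"
  unfolding quad4_def by (rule sum.cong[OF refl], rule sum.cong[OF refl], rule sum.cong[OF refl], rule sum.cong[OF refl]) (simp add: assms)

lemma bil_add: "bil n (\<lambda>a b. X a b + Y a b) v w = bil n X v w + bil n Y v w"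
  unfolding bil_def distrib_right sum.distrib ..
lemma bil_diff: "bil n (\<lambda>a b. X a b - Y a b) v w = bil n X v w - bil n Y v w"
  unfolding bil_def left_diff_distrib sum_subtractf ..
lemma bil_cmult: "bil n (\<lambda>a b. c * X a b) v w = c * bil n X v w"
  unfolding bil_def mult.assoc sum_distrib_left ..
lemma bil_zero: "bil n (\<lambda>a b. 0) v w = 0"
  unfolding bil_def by simp
lemma bil_sum: "finite S \<Longrightarrow> bil n (\<lambda>a b. \<Sum>i\<in>S. X i a b) v w = (\<Sum>i\<in>S. bil n (X i) v w)"
  by (induction S rule: finite_induct) (simp_all add: bil_zero bil_add)
lemma bil_delta: assumes "p < n" "q < n" shows "bil n (\<lambda>a b. ev p a * ev q b) v w = v p * w q"
proof -
  have "bil n (\<lambda>a b. ev p a * ev q b) v w = (\<Sum>x<n. ev p x * v x * (\<Sum>y<n. ev q y * w y))"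
    unfolding bil_def by (simp add: sum_distrib_left algebra_simps)
  also have "\<dots> = v p * w q" using assms by (simp add: sum_ev1 mult.assoc)
  finally show ?thesis .
qed

lemma quad4_add: "quad4 n (\<lambda>a b c d. X a b c d + Y a b c d) v1 v2 v3 v4 = quad4 n X v1 v2 v3 v4 + quad4 n Y v1 v2 v3 v4"
  unfolding quad4_def distrib_right sum.distrib ..
lemma quad4_cmult: "quad4 n (\<lambda>a b c d. k * X a b c d) v1 v2 v3 v4 = k * quad4 n X v1 v2 v3 v4"
  unfolding quad4_def mult.assoc sum_distrib_left ..
lemma quad4_uminus: "quad4 n (\<lambda>a b c d. - X a b c d) v1 v2 v3 v4 = - quad4 n X v1 v2 v3 v4"
  unfolding quad4_def mult_minus_left sum_negf ..
lemma quad4_zero: "quad4 n (\<lambda>a b c d. 0) v1 v2 v3 v4 = 0"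
  unfolding quad4_def by simp
lemma quad4_sum: "finite S \<Longrightarrow> quad4 n (\<lambda>a b c d. \<Sum>i\<in>S. X i a b c d) v1 v2 v3 v4 = (\<Sum>i\<in>S. quad4 n (X i) v1 v2 v3 v4)"
  by (induction S rule: finite_induct) (simp_all add: quad4_zero quad4_add)
lemma quad4_prod: "quad4 n (\<lambda>a b c d. X a b * Y c d) v1 v2 v3 v4 = bil n X v1 v2 * bil n Y v3 v4"
proof -
  have "bil n X v1 v2 * bil n Y v3 v4 = (\<Sum>a<n. \<Sum>b<n. X a b * v1 a * v2 b * bil n Y v3 v4)"
    unfolding bil_def[of n X] sum_distrib_right ..
  also have "\<dots> = quad4 n (\<lambda>a b c d. X a b * Y c d) v1 v2 v3 v4"
    unfolding quad4_def bil_def sum_distrib_left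
    by (intro sum.cong refl) (simp add: algebra_simps)
  finally show ?thesis by simp
qed


lemma dl_ev: "dl p a = ev p a" unfolding dl_def ev_def ..

lemma bil_multc: "bil n (\<lambda>a b. X a b * c) v w = bil n X v w * c"
  using bil_cmult[of n c X v w] by (simp add: mult.commute)

lemma bil_dd: "p < n \<Longrightarrow> q < n \<Longrightarrow> bil n (\<lambda>a b. dl p a * dl q b) v w = v p * w q"
  unfolding dl_ev by (rule bil_delta)

lemma sum_s3: "(\<Sum>i\<in>{1..k}. eps i * (dl (2*k+1+i) a * dl (2*k+1+i) b)) =
   (if a = b \<and> 2*k+2 \<le> a \<and> a < 3*k+2 then eps (a - (2*k+1)) else 0)"
proof -
  have "(\<Sum>i\<in>{1..k}. eps i * (dl (2*k+1+i) a * dl (2*k+1+i) b)) =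
     (\<Sum>i\<in>{1..k}. dl i (a - (2*k+1)) * (if 2*k+1 < a \<and> a = b then eps i else 0))"
    by (rule sum.cong) (auto simp: dl_def)
  also have "\<dots> = (if a - (2*k+1) \<in> {1..k} then (if 2*k+1 < a \<and> a = b then eps (a - (2*k+1)) else 0) else 0)"
    by (rule sum_dl) simp
  also have "\<dots> = (if a = b \<and> 2*k+2 \<le> a \<and> a < 3*k+2 then eps (a - (2*k+1)) else 0)"
    by auto
  finally show ?thesis .
qed

lemma g0_dec: "gF k eps F (\<lambda>_. 0) a b = (\<Sum>j\<in>{0..k}. dl j a * dl (k+1+j) b + dl j b * dl (k+1+j) a)
   + (\<Sum>i\<in>{1..k}. eps i * (dl (2*k+1+i) a * dl (2*k+1+i) b))"
proof -
  have s1: "(\<Sum>j\<in>{0..k}. dl j a * dl (k+1+j) b) = (if a \<le> k \<and> b = a+k+1 then 1 else 0)"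
    by (subst sum_dl) (auto simp: dl_def)
  have s2: "(\<Sum>j\<in>{0..k}. dl j b * dl (k+1+j) a) = (if b \<le> k \<and> a = b+k+1 then 1 else 0)"
    by (subst sum_dl) (auto simp: dl_def)
  show ?thesis unfolding sum.distrib s1 s2 sum_s3 by (auto simp: gF_def)
qed

lemma model_ip_g0: "model_ip k eps = gF k eps F (\<lambda>_. 0)"
  by (intro ext) (auto simp: model_ip_def gF_def)

lemma bil_g0:
  "bil (3*k+2) (gF k eps F (\<lambda>_. 0)) v w = (\<Sum>j\<in>{0..k}. v j * w (k+1+j) + v (k+1+j) * w j)
    + (\<Sum>i\<in>{1..k}. eps i * (v (2*k+1+i) * w (2*k+1+i)))"
proof -
  have e: "gF k eps F (\<lambda>_. 0) = (\<lambda>a b. (\<Sum>j\<in>{0..k}. dl j a * dl (k+1+j) b + dl (k+1+j) a * dl j b)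
   + (\<Sum>i\<in>{1..k}. eps i * (dl (2*k+1+i) a * dl (2*k+1+i) b)))"
    by (intro ext) (simp add: g0_dec mult.commute)
  have t1: "bil (3*k+2) (\<lambda>a b. dl j a * dl (k+1+j) b + dl (k+1+j) a * dl j b) v w = v j * w (k+1+j) + v (k+1+j) * w j"
    if j: "j \<in> {0..k}" for j
    using j by (simp add: bil_add bil_dd)
  have t2: "bil (3*k+2) (\<lambda>a b. eps i * (dl (2*k+1+i) a * dl (2*k+1+i) b)) v w = eps i * (v (2*k+1+i) * w (2*k+1+i))"
    if i: "i \<in> {1..k}" for i
    using i by (simp add: bil_cmult bil_dd)
  have "bil (3*k+2) (gF k eps F (\<lambda>_. 0)) v w =
     (\<Sum>j\<in>{0..k}. bil (3*k+2) (\<lambda>a b. dl j a * dl (k+1+j) b + dl (k+1+j) a * dl j b) v w) +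
     (\<Sum>i\<in>{1..k}. bil (3*k+2) (\<lambda>a b. eps i * (dl (2*k+1+i) a * dl (2*k+1+i) b)) v w)"
    unfolding e by (simp only: bil_add bil_sum[OF finite_atLeastAtMost])
  also have "\<dots> = (\<Sum>j\<in>{0..k}. v j * w (k+1+j) + v (k+1+j) * w j)
    + (\<Sum>i\<in>{1..k}. eps i * (v (2*k+1+i) * w (2*k+1+i)))"
    by (intro arg_cong2[where f="(+)"] sum.cong refl t1 t2)
  finally show ?thesis .
qed

lemma bil_gF:
  "bil (3*k+2) (gF k eps F P) v w = bil (3*k+2) (gF k eps F (\<lambda>_. 0)) v w
    + (\<Sum>i\<in>{1..k}. phi k F i P * (v 0 * w i + v i * w 0) + psi k i P * (v i * w i))"
proof -
  have e: "gF k eps F P = (\<lambda>a b. gF k eps F (\<lambda>_. 0) a b +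
     (\<Sum>i\<in>{1..k}. (dl 0 a * dl i b + dl i a * dl 0 b) * phi k F i P + dl i a * dl i b * psi k i P))"
    by (intro ext) (simp only: gF_dec[of k eps F P] sym0_def)
  have t: "bil (3*k+2) (\<lambda>a b. (dl 0 a * dl i b + dl i a * dl 0 b) * phi k F i P + dl i a * dl i b * psi k i P) v w
     = phi k F i P * (v 0 * w i + v i * w 0) + psi k i P * (v i * w i)" if i: "i \<in> {1..k}" for i
  proof -
    have "bil (3*k+2) (\<lambda>a b. (dl 0 a * dl i b + dl i a * dl 0 b) * phi k F i P + dl i a * dl i b * psi k i P) v w
      = (bil (3*k+2) (\<lambda>a b. dl 0 a * dl i b) v w + bil (3*k+2) (\<lambda>a b. dl i a * dl 0 b) v w) * phi k F i P
        + bil (3*k+2) (\<lambda>a b. dl i a * dl i b) v w * psi k i P"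
      by (simp only: bil_add bil_multc)
    also have "\<dots> = (v 0 * w i + v i * w 0) * phi k F i P + (v i * w i) * psi k i P"
      using i by (simp add: bil_dd)
    finally show ?thesis by (simp add: mult.commute)
  qed
  have "bil (3*k+2) (gF k eps F P) v w = bil (3*k+2) (gF k eps F (\<lambda>_. 0)) v w +
     (\<Sum>i\<in>{1..k}. bil (3*k+2) (\<lambda>a b. (dl 0 a * dl i b + dl i a * dl 0 b) * phi k F i P + dl i a * dl i b * psi k i P) v w)"
    unfolding e by (simp only: bil_add bil_sum[OF finite_atLeastAtMost])
  also have "\<dots> = bil (3*k+2) (gF k eps F (\<lambda>_. 0)) v w
    + (\<Sum>i\<in>{1..k}. phi k F i P * (v 0 * w i + v i * w 0) + psi k i P * (v i * w i))"
    by (intro arg_cong2[where f="(+)"] sum.cong refl t)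
  finally show ?thesis .
qed


definition AvX :: "nat \<Rightarrow> (nat \<Rightarrow> real) \<Rightarrow> (nat \<Rightarrow> real) \<Rightarrow> real" where
  "AvX i v w = v 0 * w i - v i * w 0"
definition BvX :: "nat \<Rightarrow> nat \<Rightarrow> (nat \<Rightarrow> real) \<Rightarrow> (nat \<Rightarrow> real) \<Rightarrow> real" where
  "BvX k i v w = v i * w (2*k+1+i) - v (2*k+1+i) * w i"

lemma model_R_i:
  assumes i: "1 \<le> i" "i \<le> k"
  shows "(let s = 2*k+1+i in
       (if (a,b,c,d) = (0,i,i,s) then 1 else 0)
     + (if (a,b,c,d) = (i,0,i,s) then -1 else 0)
     + (if (a,b,c,d) = (0,i,s,i) then -1 else 0)
     + (if (a,b,c,d) = (i,0,s,i) then 1 else 0)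
     + (if (a,b,c,d) = (i,s,0,i) then 1 else 0)
     + (if (a,b,c,d) = (s,i,0,i) then -1 else 0)
     + (if (a,b,c,d) = (i,s,i,0) then -1 else 0)
     + (if (a,b,c,d) = (s,i,i,0) then 1 else 0) :: real) = Ai i a b * Bi k i c d + Bi k i a b * Ai i c d"
proof -
  define s where "s = 2*k+1+i"
  have d: "i \<noteq> 0" "s \<noteq> 0" "s \<noteq> i" "i \<noteq> s" "0 \<noteq> s" "0 \<noteq> i" using i unfolding s_def by auto
  show ?thesis
    unfolding Let_def Ai_def Bi_def s_def[symmetric]
    using idx4[of a i s] idx4[of b i s] idx4[of c i s] idx4[of d i s]
    apply (elim disjE)
    apply (simp_all add: dl_def d)
    done
qed

lemma model_R_eq: "model_R k a b c d = (\<Sum>i\<in>{1..k}. Ai i a b * Bi k i c d + Bi k i a b * Ai i c d)"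
  unfolding model_R_def
proof (rule sum.cong)
  fix i assume i: "i \<in> {1..k}"
  show "(let s = 2*k+1+i in
       (if (a,b,c,d) = (0,i,i,s) then 1 else 0)
     + (if (a,b,c,d) = (i,0,i,s) then -1 else 0)
     + (if (a,b,c,d) = (0,i,s,i) then -1 else 0)
     + (if (a,b,c,d) = (i,0,s,i) then 1 else 0)
     + (if (a,b,c,d) = (i,s,0,i) then 1 else 0)
     + (if (a,b,c,d) = (s,i,0,i) then -1 else 0)
     + (if (a,b,c,d) = (i,s,i,0) then -1 else 0)
     + (if (a,b,c,d) = (s,i,i,0) then 1 else 0) :: real) = Ai i a b * Bi k i c d + Bi k i a b * Ai i c d"
    using i by (intro model_R_i) auto
qed simp

lemma bil_Ai: "i \<in> {1..k} \<Longrightarrow> bil (3*k+2) (Ai i) v w = AvX i v w"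
proof -
  assume i: "i \<in> {1..k}"
  have "Ai i = (\<lambda>a b. dl 0 a * dl i b - dl i a * dl 0 b)" by (intro ext) (simp add: Ai_def)
  then show ?thesis using i by (simp add: bil_diff bil_dd AvX_def)
qed

lemma bil_Bi: "i \<in> {1..k} \<Longrightarrow> bil (3*k+2) (Bi k i) v w = BvX k i v w"
proof -
  assume i: "i \<in> {1..k}"
  have "Bi k i = (\<lambda>a b. dl i a * dl (2*k+1+i) b - dl (2*k+1+i) a * dl i b)" by (intro ext) (simp add: Bi_def)
  then show ?thesis using i by (simp add: bil_diff bil_dd BvX_def)
qed

lemma quad4_modelR: "quad4 (3*k+2) (model_R k) w1 w2 w3 w4 =
   (\<Sum>i\<in>{1..k}. AvX i w1 w2 * BvX k i w3 w4 + BvX k i w1 w2 * AvX i w3 w4)"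
proof -
  have e: "model_R k = (\<lambda>a b c d. \<Sum>i\<in>{1..k}. Ai i a b * Bi k i c d + Bi k i a b * Ai i c d)"
    by (intro ext) (rule model_R_eq)
  show ?thesis unfolding e quad4_sum[OF finite_atLeastAtMost]
  proof (rule sum.cong)
    fix i assume i: "i \<in> {1..k}"
    show "quad4 (3*k+2) (\<lambda>a b c d. Ai i a b * Bi k i c d + Bi k i a b * Ai i c d) w1 w2 w3 w4 =
        AvX i w1 w2 * BvX k i w3 w4 + BvX k i w1 w2 * AvX i w3 w4"
      by (simp only: quad4_add quad4_prod bil_Ai[OF i] bil_Bi[OF i])
  qed simp
qed

lemma quad4_R0: "quad4 (3*k+2) (R0 k eps F P) v1 v2 v3 v4 =
   (\<Sum>i\<in>{1..k}. (1 + deriv (F i) (P i)) * (AvX i v1 v2 * BvX k i v3 v4 + BvX k i v1 v2 * AvX i v3 v4)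
       + eps i * (F i (P i))^2 * (- (AvX i v1 v2 * AvX i v3 v4)))"
proof -
  have e: "R0 k eps F P = (\<lambda>a b c d. \<Sum>i\<in>{1..k}. (1 + deriv (F i) (P i)) * (Ai i a b * Bi k i c d + Bi k i a b * Ai i c d)
       + eps i * (F i (P i))^2 * (- (Ai i a b * Ai i c d)))"
    by (intro ext) (simp add: R0_def)
  show ?thesis unfolding e quad4_sum[OF finite_atLeastAtMost]
  proof (rule sum.cong)
    fix i assume i: "i \<in> {1..k}"
    show "quad4 (3*k+2) (\<lambda>a b c d. (1 + deriv (F i) (P i)) * (Ai i a b * Bi k i c d + Bi k i a b * Ai i c d)
       + eps i * (F i (P i))^2 * (- (Ai i a b * Ai i c d))) v1 v2 v3 v4 =
      (1 + deriv (F i) (P i)) * (AvX i v1 v2 * BvX k i v3 v4 + BvX k i v1 v2 * AvX i v3 v4)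
       + eps i * (F i (P i))^2 * (- (AvX i v1 v2 * AvX i v3 v4))"
      by (simp only: quad4_add quad4_prod quad4_cmult quad4_uminus bil_Ai[OF i] bil_Bi[OF i])
  qed simp
qed

context setting begin
lemma quad4_curv: "quad4 (3*k+2) (curv (gF k eps F) (3*k+2) P) v1 v2 v3 v4 = quad4 (3*k+2) (R0 k eps F P) v1 v2 v3 v4"
  by (rule quad4_congT) (rule curv_R0)
end


definition cc :: "(nat \<Rightarrow> real \<Rightarrow> real) \<Rightarrow> (nat \<Rightarrow> real) \<Rightarrow> nat \<Rightarrow> real" where
  "cc F P i = 1 + deriv (F i) (P i)"
definition Lq :: "(nat \<Rightarrow> real \<Rightarrow> real) \<Rightarrow> (nat \<Rightarrow> real) \<Rightarrow> nat \<Rightarrow> real" where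
  "Lq F P i = sqrt \<bar>cc F P i\<bar>"
definition mu :: "(nat \<Rightarrow> real \<Rightarrow> real) \<Rightarrow> (nat \<Rightarrow> real) \<Rightarrow> nat \<Rightarrow> real" where
  "mu F P i = sgn (cc F P i)"
definition be :: "(nat \<Rightarrow> real) \<Rightarrow> (nat \<Rightarrow> real \<Rightarrow> real) \<Rightarrow> (nat \<Rightarrow> real) \<Rightarrow> nat \<Rightarrow> real" where
  "be eps F P i = - (eps i * (F i (P i))^2) / (2 * cc F P i)"

definition Mf :: "nat \<Rightarrow> (nat \<Rightarrow> real) \<Rightarrow> (nat \<Rightarrow> real \<Rightarrow> real) \<Rightarrow> (nat \<Rightarrow> real) \<Rightarrow> (nat \<Rightarrow> real) \<Rightarrow> nat \<Rightarrow> real" where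
  "Mf k eps F P v a = (if a = 0 then v 0
    else if a \<le> k then Lq F P a * v a
    else if a = k+1 then v (k+1) + (\<Sum>i\<in>{1..k}. eps i * be eps F P i * (v (2*k+1+i) - be eps F P i * v 0 / 2))
    else if a \<le> 2*k+1 then (v a + phi k F (a-(k+1)) P * v 0 + psi k (a-(k+1)) P * v (a-(k+1)) / 2) / Lq F P (a-(k+1))
    else if a < 3*k+2 then mu F P (a-(2*k+1)) * (v a - be eps F P (a-(2*k+1)) * v 0)
    else 0)"

definition Nf :: "nat \<Rightarrow> (nat \<Rightarrow> real) \<Rightarrow> (nat \<Rightarrow> real \<Rightarrow> real) \<Rightarrow> (nat \<Rightarrow> real) \<Rightarrow> (nat \<Rightarrow> real) \<Rightarrow> nat \<Rightarrow> real" where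
  "Nf k eps F P w a = (if a = 0 then w 0
    else if a \<le> k then w a / Lq F P a
    else if a = k+1 then w (k+1) - (\<Sum>i\<in>{1..k}. eps i * be eps F P i * (mu F P i * w (2*k+1+i) + be eps F P i * w 0 / 2))
    else if a \<le> 2*k+1 then Lq F P (a-(k+1)) * w a - phi k F (a-(k+1)) P * w 0 - psi k (a-(k+1)) P * w (a-(k+1)) / (2 * Lq F P (a-(k+1)))
    else if a < 3*k+2 then mu F P (a-(2*k+1)) * w a + be eps F P (a-(2*k+1)) * w 0
    else 0)"

lemma Mf_0: "Mf k eps F P v 0 = v 0" unfolding Mf_def by simp
lemma Mf_i: "i \<in> {1..k} \<Longrightarrow> Mf k eps F P v i = Lq F P i * v i" unfolding Mf_def by simp
lemma Mf_v0: "Mf k eps F P v (k+1) = v (k+1) + (\<Sum>i\<in>{1..k}. eps i * be eps F P i * (v (2*k+1+i) - be eps F P i * v 0 / 2))"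
  unfolding Mf_def by simp
lemma Mf_vj: "j \<in> {1..k} \<Longrightarrow> Mf k eps F P v (k+1+j) = (v (k+1+j) + phi k F j P * v 0 + psi k j P * v j / 2) / Lq F P j"
  unfolding Mf_def by simp
lemma Mf_s: "i \<in> {1..k} \<Longrightarrow> Mf k eps F P v (2*k+1+i) = mu F P i * (v (2*k+1+i) - be eps F P i * v 0)"
  unfolding Mf_def by simp

lemma Nf_0: "Nf k eps F P v 0 = v 0" unfolding Nf_def by simp
lemma Nf_i: "i \<in> {1..k} \<Longrightarrow> Nf k eps F P v i = v i / Lq F P i" unfolding Nf_def by simp
lemma Nf_v0: "Nf k eps F P w (k+1) = w (k+1) - (\<Sum>i\<in>{1..k}. eps i * be eps F P i * (mu F P i * w (2*k+1+i) + be eps F P i * w 0 / 2))"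
  unfolding Nf_def by simp
lemma Nf_vj: "j \<in> {1..k} \<Longrightarrow> Nf k eps F P w (k+1+j) = Lq F P j * w (k+1+j) - phi k F j P * w 0 - psi k j P * w j / (2 * Lq F P j)"
  unfolding Nf_def by simp
lemma Nf_s: "i \<in> {1..k} \<Longrightarrow> Nf k eps F P w (2*k+1+i) = mu F P i * w (2*k+1+i) + be eps F P i * w 0"
  unfolding Nf_def by simp

lemma idx5: fixes a k :: nat assumes "a < 3*k+2"
  shows "a = 0 \<or> (a \<in> {1..k}) \<or> a = k+1 \<or> (\<exists>j\<in>{1..k}. a = k+1+j) \<or> (\<exists>i\<in>{1..k}. a = 2*k+1+i)"
proof -
  consider "a = 0" | "1 \<le> a \<and> a \<le> k" | "a = k+1" | "k+2 \<le> a \<and> a \<le> 2*k+1" | "2*k+2 \<le> a" by linarith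
  then show ?thesis
  proof cases
    case 4 then have "a - (k+1) \<in> {1..k}" "a = k+1+(a-(k+1))" by auto
    then show ?thesis by blast
  next
    case 5 then have "a - (2*k+1) \<in> {1..k}" "a = 2*k+1+(a-(2*k+1))" using assms by auto
    then show ?thesis by blast
  qed auto
qed


lemma Mf_add: "Mf k eps F P (\<lambda>x. u x + v x) a = Mf k eps F P u a + Mf k eps F P v a"
proof -
  have s: "(\<Sum>i\<in>{1..k}. eps i * be eps F P i * ((u (2*k+1+i) + v (2*k+1+i)) - be eps F P i * (u 0 + v 0) / 2))
    = (\<Sum>i\<in>{1..k}. eps i * be eps F P i * (u (2*k+1+i) - be eps F P i * u 0 / 2))
     + (\<Sum>i\<in>{1..k}. eps i * be eps F P i * (v (2*k+1+i) - be eps F P i * v 0 / 2))"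
    unfolding sum.distrib[symmetric] by (rule sum.cong) (simp_all add: algebra_simps)
  show ?thesis unfolding Mf_def using s by (simp add: algebra_simps add_divide_distrib)
qed

lemma Mf_mult: "Mf k eps F P (\<lambda>x. c * u x) a = c * Mf k eps F P u a"
proof -
  have s: "(\<Sum>i\<in>{1..k}. eps i * be eps F P i * (c * u (2*k+1+i) - be eps F P i * (c * u 0) / 2))
    = c * (\<Sum>i\<in>{1..k}. eps i * be eps F P i * (u (2*k+1+i) - be eps F P i * u 0 / 2))"
    unfolding sum_distrib_left by (rule sum.cong) (simp_all add: algebra_simps)
  show ?thesis unfolding Mf_def using s by (simp add: algebra_simps)
qed

lemma Nf_add: "Nf k eps F P (\<lambda>x. u x + v x) a = Nf k eps F P u a + Nf k eps F P v a"
proof -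
  have s: "(\<Sum>i\<in>{1..k}. eps i * be eps F P i * (mu F P i * (u (2*k+1+i) + v (2*k+1+i)) + be eps F P i * (u 0 + v 0) / 2))
    = (\<Sum>i\<in>{1..k}. eps i * be eps F P i * (mu F P i * u (2*k+1+i) + be eps F P i * u 0 / 2))
     + (\<Sum>i\<in>{1..k}. eps i * be eps F P i * (mu F P i * v (2*k+1+i) + be eps F P i * v 0 / 2))"
    unfolding sum.distrib[symmetric] by (rule sum.cong) (simp_all add: algebra_simps)
  show ?thesis unfolding Nf_def using s by (simp add: algebra_simps add_divide_distrib)
qed

lemma Nf_mult: "Nf k eps F P (\<lambda>x. c * u x) a = c * Nf k eps F P u a"
proof -
  have s: "(\<Sum>i\<in>{1..k}. eps i * be eps F P i * (mu F P i * (c * u (2*k+1+i)) + be eps F P i * (c * u 0) / 2))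
    = c * (\<Sum>i\<in>{1..k}. eps i * be eps F P i * (mu F P i * u (2*k+1+i) + be eps F P i * u 0 / 2))"
    unfolding sum_distrib_left by (rule sum.cong) (simp_all add: algebra_simps)
  show ?thesis unfolding Nf_def using s by (simp add: algebra_simps)
qed

lemma lin_Mf: "lin n (Mf k eps F P)" unfolding lin_def by (simp add: Mf_add Mf_mult)
lemma lin_Nf: "lin n (Nf k eps F P)" unfolding lin_def by (simp add: Nf_add Nf_mult)

lemma loc_Mf: "loc (3*k+2) (Mf k eps F P)"
  unfolding loc_def
proof (intro allI impI)
  fix u v :: "nat \<Rightarrow> real" and a assume h: "\<forall>x<3*k+2. u x = v x" and a: "a < 3*k+2"
  have s: "(\<Sum>i\<in>{1..k}. eps i * be eps F P i * (u (2*k+1+i) - be eps F P i * u 0 / 2))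
     = (\<Sum>i\<in>{1..k}. eps i * be eps F P i * (v (2*k+1+i) - be eps F P i * v 0 / 2))"
    by (rule sum.cong) (use h in auto)
  show "Mf k eps F P u a = Mf k eps F P v a"
    unfolding Mf_def using h a s by auto
qed

lemma loc_Nf: "loc (3*k+2) (Nf k eps F P)"
  unfolding loc_def
proof (intro allI impI)
  fix u v :: "nat \<Rightarrow> real" and a assume h: "\<forall>x<3*k+2. u x = v x" and a: "a < 3*k+2"
  have s: "(\<Sum>i\<in>{1..k}. eps i * be eps F P i * (mu F P i * u (2*k+1+i) + be eps F P i * u 0 / 2))
     = (\<Sum>i\<in>{1..k}. eps i * be eps F P i * (mu F P i * v (2*k+1+i) + be eps F P i * v 0 / 2))"
    by (rule sum.cong) (use h in auto)
  show "Nf k eps F P u a = Nf k eps F P v a"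
    unfolding Nf_def using h a s by auto
qed


locale setting2 = setting +
  assumes ncc: "\<And>i u. i \<in> {1..k} \<Longrightarrow> deriv (F i) u + 1 \<noteq> 0"
begin

lemma cc_nz: "i \<in> {1..k} \<Longrightarrow> cc F P i \<noteq> 0"
  unfolding cc_def using ncc by (simp add: add.commute)
lemma Lq_nz: "i \<in> {1..k} \<Longrightarrow> Lq F P i \<noteq> 0"
  unfolding Lq_def using cc_nz by simp
lemma mu_sq: "i \<in> {1..k} \<Longrightarrow> mu F P i * mu F P i = 1"
  unfolding mu_def using cc_nz by (simp add: sgn_if)
lemma Lq_mu: "Lq F P i * Lq F P i * mu F P i = cc F P i"
  unfolding Lq_def mu_def by (simp add: abs_mult_sgn)
lemma be_cc: "i \<in> {1..k} \<Longrightarrow> 2 * be eps F P i * cc F P i = - (eps i * (F i (P i))^2)"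
  unfolding be_def using cc_nz by simp

lemma MN: assumes a: "a < 3*k+2" shows "Mf k eps F P (Nf k eps F P w) a = w a"
  using idx5[OF a]
proof (elim disjE bexE)
  assume "a = 0" then show ?thesis by (simp add: Mf_0 Nf_0)
next
  assume i: "a \<in> {1..k}" then show ?thesis using Lq_nz[OF i] by (simp add: Mf_i Nf_i)
next
  assume a: "a = k+1"
  have "(\<Sum>i\<in>{1..k}. eps i * be eps F P i * (Nf k eps F P w (2*k+1+i) - be eps F P i * Nf k eps F P w 0 / 2))
     = (\<Sum>i\<in>{1..k}. eps i * be eps F P i * (mu F P i * w (2*k+1+i) + be eps F P i * w 0 / 2))"
  proof (rule sum.cong)
    fix i assume i: "i \<in> {1..k}"
    show "eps i * be eps F P i * (Nf k eps F P w (2*k+1+i) - be eps F P i * Nf k eps F P w 0 / 2) =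
      eps i * be eps F P i * (mu F P i * w (2*k+1+i) + be eps F P i * w 0 / 2)"
      unfolding Nf_s[OF i] Nf_0 by (simp add: algebra_simps)
  qed simp
  then show ?thesis unfolding a Mf_v0 Nf_v0 by simp
next
  fix j assume j: "j \<in> {1..k}" and a: "a = k+1+j"
  show ?thesis unfolding a Mf_vj[OF j] Nf_vj[OF j] Nf_0 Nf_i[OF j] using Lq_nz[OF j]
    by (simp add: field_simps)
next
  fix i assume i: "i \<in> {1..k}" and a: "a = 2*k+1+i"
  show ?thesis unfolding a Mf_s[OF i] Nf_s[OF i] Nf_0 using mu_sq[OF i]
    by (simp add: algebra_simps)
qed

lemma NM: assumes a: "a < 3*k+2" shows "Nf k eps F P (Mf k eps F P v) a = v a"
  using idx5[OF a]
proof (elim disjE bexE)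
  assume "a = 0" then show ?thesis by (simp add: Mf_0 Nf_0)
next
  assume i: "a \<in> {1..k}" then show ?thesis using Lq_nz[OF i] by (simp add: Mf_i Nf_i)
next
  assume a: "a = k+1"
  have "(\<Sum>i\<in>{1..k}. eps i * be eps F P i * (mu F P i * Mf k eps F P v (2*k+1+i) + be eps F P i * Mf k eps F P v 0 / 2))
     = (\<Sum>i\<in>{1..k}. eps i * be eps F P i * (v (2*k+1+i) - be eps F P i * v 0 / 2))"
  proof (rule sum.cong)
    fix i assume i: "i \<in> {1..k}"
    have h: "\<And>X. mu F P i * (mu F P i * X) = X" using mu_sq[OF i] by (simp add: mult.assoc[symmetric])
    show "eps i * be eps F P i * (mu F P i * Mf k eps F P v (2*k+1+i) + be eps F P i * Mf k eps F P v 0 / 2) =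
      eps i * be eps F P i * (v (2*k+1+i) - be eps F P i * v 0 / 2)"
      unfolding Mf_s[OF i] Mf_0 h by (simp add: algebra_simps)
  qed simp
  then show ?thesis unfolding a Mf_v0 Nf_v0 by simp
next
  fix j assume j: "j \<in> {1..k}" and a: "a = k+1+j"
  show ?thesis unfolding a Mf_vj[OF j] Nf_vj[OF j] Mf_0 Mf_i[OF j] using Lq_nz[OF j]
    by (simp add: field_simps)
next
  fix i assume i: "i \<in> {1..k}" and a: "a = 2*k+1+i"
  have h: "\<And>X. mu F P i * (mu F P i * X) = X" using mu_sq[OF i] by (simp add: mult.assoc[symmetric])
  show ?thesis unfolding a Mf_s[OF i] Nf_s[OF i] Mf_0 h by simp
qed

end


lemma algX:
  fixes L m E B h q v0 vi vv vs w0 wi wv ws :: real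
  assumes L: "L \<noteq> 0" and m: "m * m = 1"
  shows "v0 * (E * B * (ws - B * w0 / 2)) + E * B * (vs - B * v0 / 2) * w0
        + (L * vi * ((wv + h * w0 + q * wi / 2) / L) + ((vv + h * v0 + q * vi / 2) / L) * (L * wi))
        + E * ((m * (vs - B * v0)) * (m * (ws - B * w0)))
      = (vi * wv + vv * wi) + E * (vs * ws) + (h * (v0 * wi + vi * w0) + q * (vi * wi))"
proof -
  have "E * ((m * (vs - B * v0)) * (m * (ws - B * w0))) = E * ((m * m) * ((vs - B * v0) * (ws - B * w0)))"
    by (simp only: mult_ac)
  also have "\<dots> = E * ((vs - B * v0) * (ws - B * w0))" using m by simp
  finally have e: "E * ((m * (vs - B * v0)) * (m * (ws - B * w0))) = E * ((vs - B * v0) * (ws - B * w0))" .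
  show ?thesis unfolding e using L by (simp add: field_simps)
qed

context setting2 begin

lemma bil_M: "bil (3*k+2) (model_ip k eps) (Mf k eps F P v) (Mf k eps F P w) = bil (3*k+2) (gF k eps F P) v w"
proof -
  let ?Mv = "Mf k eps F P v" and ?Mw = "Mf k eps F P w"
  let ?X = "\<lambda>i. v 0 * (eps i * be eps F P i * (w (2*k+1+i) - be eps F P i * w 0 / 2))
        + eps i * be eps F P i * (v (2*k+1+i) - be eps F P i * v 0 / 2) * w 0
        + (?Mv i * ?Mw (k+1+i) + ?Mv (k+1+i) * ?Mw i)
        + eps i * (?Mv (2*k+1+i) * ?Mw (2*k+1+i))"
  let ?Y = "\<lambda>i. (v i * w (k+1+i) + v (k+1+i) * w i) + eps i * (v (2*k+1+i) * w (2*k+1+i))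
        + (phi k F i P * (v 0 * w i + v i * w 0) + psi k i P * (v i * w i))"
  have split0: "(\<Sum>j\<in>{0..k}. f j) = f 0 + (\<Sum>j\<in>{1..k}. f j)" for f :: "nat \<Rightarrow> real"
    by (simp add: sum.atLeast_Suc_atMost)
  have "bil (3*k+2) (model_ip k eps) ?Mv ?Mw
      = (?Mv 0 * ?Mw (k+1) + ?Mv (k+1) * ?Mw 0)
        + (\<Sum>j\<in>{1..k}. ?Mv j * ?Mw (k+1+j) + ?Mv (k+1+j) * ?Mw j)
        + (\<Sum>i\<in>{1..k}. eps i * (?Mv (2*k+1+i) * ?Mw (2*k+1+i)))"
    unfolding model_ip_g0[of k eps F] bil_g0 split0 by simp
  also have "?Mv 0 * ?Mw (k+1) + ?Mv (k+1) * ?Mw 0 = (v 0 * w (k+1) + v (k+1) * w 0)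
      + (v 0 * (\<Sum>i\<in>{1..k}. eps i * be eps F P i * (w (2*k+1+i) - be eps F P i * w 0 / 2))
        + (\<Sum>i\<in>{1..k}. eps i * be eps F P i * (v (2*k+1+i) - be eps F P i * v 0 / 2)) * w 0)"
    unfolding Mf_0 Mf_v0 by (simp add: algebra_simps)
  also have "v 0 * (\<Sum>i\<in>{1..k}. eps i * be eps F P i * (w (2*k+1+i) - be eps F P i * w 0 / 2))
        + (\<Sum>i\<in>{1..k}. eps i * be eps F P i * (v (2*k+1+i) - be eps F P i * v 0 / 2)) * w 0
      = (\<Sum>i\<in>{1..k}. v 0 * (eps i * be eps F P i * (w (2*k+1+i) - be eps F P i * w 0 / 2))
        + eps i * be eps F P i * (v (2*k+1+i) - be eps F P i * v 0 / 2) * w 0)"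
    by (simp only: sum.distrib sum_distrib_left sum_distrib_right)
  finally have L: "bil (3*k+2) (model_ip k eps) ?Mv ?Mw = (v 0 * w (k+1) + v (k+1) * w 0) + (\<Sum>i\<in>{1..k}. ?X i)"
    by (simp only: sum.distrib add.assoc)
  have R: "bil (3*k+2) (gF k eps F P) v w = (v 0 * w (k+1) + v (k+1) * w 0) + (\<Sum>i\<in>{1..k}. ?Y i)"
    unfolding bil_gF[of k eps F P v w] bil_g0 split0 by (simp only: sum.distrib add.assoc add_0_right)
  have XY: "?X i = ?Y i" if i: "i \<in> {1..k}" for i
    unfolding Mf_i[OF i] Mf_vj[OF i] Mf_s[OF i] Mf_0
    by (rule algX[OF Lq_nz[OF i] mu_sq[OF i]])
  show ?thesis unfolding L R using XY by simp
qed

lemma Av_M: "i \<in> {1..k} \<Longrightarrow> AvX i (Mf k eps F P v) (Mf k eps F P w) = Lq F P i * AvX i v w"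
  unfolding AvX_def by (simp only: Mf_0 Mf_i) (simp add: algebra_simps)

lemma Bv_M: assumes i: "i \<in> {1..k}" shows "BvX k i (Mf k eps F P v) (Mf k eps F P w) = Lq F P i * mu F P i * (BvX k i v w + be eps F P i * AvX i v w)"
  unfolding AvX_def BvX_def Mf_0 Mf_i[OF i] Mf_s[OF i] by (simp add: algebra_simps)

lemma quad_M: "quad4 (3*k+2) (model_R k) (Mf k eps F P v1) (Mf k eps F P v2) (Mf k eps F P v3) (Mf k eps F P v4)
   = quad4 (3*k+2) (curv (gF k eps F) (3*k+2) P) v1 v2 v3 v4"
  unfolding quad4_modelR quad4_curv quad4_R0
proof (rule sum.cong)
  fix i assume i: "i \<in> {1..k}"
  have c: "Lq F P i * Lq F P i * mu F P i = 1 + deriv (F i) (P i)" using Lq_mu[of P i] unfolding cc_def .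
  have b: "2 * be eps F P i * (1 + deriv (F i) (P i)) = - (eps i * (F i (P i))^2)" using be_cc[OF i] unfolding cc_def .
  show "AvX i (Mf k eps F P v1) (Mf k eps F P v2) * BvX k i (Mf k eps F P v3) (Mf k eps F P v4) +
        BvX k i (Mf k eps F P v1) (Mf k eps F P v2) * AvX i (Mf k eps F P v3) (Mf k eps F P v4) =
        (1 + deriv (F i) (P i)) * (AvX i v1 v2 * BvX k i v3 v4 + BvX k i v1 v2 * AvX i v3 v4) +
        eps i * (F i (P i))\<^sup>2 * - (AvX i v1 v2 * AvX i v3 v4)"
  proof -
    let ?A12 = "AvX i v1 v2" and ?A34 = "AvX i v3 v4" and ?B12 = "BvX k i v1 v2" and ?B34 = "BvX k i v3 v4"
    have "AvX i (Mf k eps F P v1) (Mf k eps F P v2) * BvX k i (Mf k eps F P v3) (Mf k eps F P v4) +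
        BvX k i (Mf k eps F P v1) (Mf k eps F P v2) * AvX i (Mf k eps F P v3) (Mf k eps F P v4)
      = (Lq F P i * Lq F P i * mu F P i) * (?A12 * ?B34 + ?B12 * ?A34) + (2 * be eps F P i * (Lq F P i * Lq F P i * mu F P i)) * (?A12 * ?A34)"
      unfolding Av_M[OF i] Bv_M[OF i] by (simp add: algebra_simps)
    also have "\<dots> = (1 + deriv (F i) (P i)) * (?A12 * ?B34 + ?B12 * ?A34) + (- (eps i * (F i (P i))^2)) * (?A12 * ?A34)"
      by (simp only: c b)
    also have "\<dots> = (1 + deriv (F i) (P i)) * (?A12 * ?B34 + ?B12 * ?A34) + eps i * (F i (P i))\<^sup>2 * - (?A12 * ?A34)"
      by (simp add: algebra_simps)
    finally show ?thesis .
  qed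
qed simp

end


lemma loc_comp: "loc n f \<Longrightarrow> loc n g \<Longrightarrow> loc n (\<lambda>v. f (g v))"
  unfolding loc_def by blast

lemma bil_ev: assumes "a < n" "b < n" shows "bil n B (ev a) (ev b) = B a b"
proof -
  have "bil n B (ev a) (ev b) = (\<Sum>x<n. ev a x * (\<Sum>y<n. B x y * ev b y))"
    unfolding bil_def by (simp add: sum_distrib_left algebra_simps)
  also have "\<dots> = B a b" using assms by (simp add: sum_ev1 sum_ev2)
  finally show ?thesis .
qed

lemma quad4_ev: assumes "a < n" "b < n" "c < n" "d < n" shows "quad4 n T (ev a) (ev b) (ev c) (ev d) = T a b c d"
proof -
  have "quad4 n T (ev a) (ev b) (ev c) (ev d) =
    (\<Sum>x<n. ev a x * (\<Sum>y<n. ev b y * (\<Sum>z<n. ev c z * (\<Sum>u<n. T x y z u * ev d u))))"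
    unfolding quad4_def by (simp add: sum_distrib_left algebra_simps)
  also have "\<dots> = T a b c d" using assms by (simp add: sum_ev1 sum_ev2)
  finally show ?thesis .
qed

context setting2 begin


lemma repM: "rep (3*k+2) (\<lambda>a b. Mf k eps F P (ev b) a) (Mf k eps F P)"
  by (rule rep_lin[OF lin_Mf loc_Mf])
lemma repN: "rep (3*k+2) (\<lambda>a b. Nf k eps F P (ev b) a) (Nf k eps F P)"
  by (rule rep_lin[OF lin_Nf loc_Nf])

lemma part1: "\<exists>M. invertible_mat (3*k+2) M \<and>
        (\<forall>v w. bil (3*k+2) (model_ip k eps) (mv (3*k+2) M v) (mv (3*k+2) M w)
               = bil (3*k+2) (gF k eps F P) v w) \<and>
        (\<forall>v1 v2 v3 v4. quad4 (3*k+2) (model_R k)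
               (mv (3*k+2) M v1) (mv (3*k+2) M v2) (mv (3*k+2) M v3) (mv (3*k+2) M v4)
             = quad4 (3*k+2) (curv (gF k eps F) (3*k+2) P) v1 v2 v3 v4)"
proof (intro exI conjI allI)
  let ?M = "\<lambda>a b. Mf k eps F P (ev b) a"
  have r: "\<And>v x. x < 3*k+2 \<Longrightarrow> mv (3*k+2) ?M v x = Mf k eps F P v x"
    using repM unfolding rep_def by blast
  show "invertible_mat (3*k+2) ?M"
    by (rule inv_rep[OF repM repN loc_Mf loc_Nf MN NM])
  fix v w
  show "bil (3*k+2) (model_ip k eps) (mv (3*k+2) ?M v) (mv (3*k+2) ?M w) = bil (3*k+2) (gF k eps F P) v w"
    using bil_M[of P v w] by (subst bil_cong[OF r r]) auto
next
  let ?M = "\<lambda>a b. Mf k eps F P (ev b) a"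
  have r: "\<And>v x. x < 3*k+2 \<Longrightarrow> mv (3*k+2) ?M v x = Mf k eps F P v x"
    using repM unfolding rep_def by blast
  fix v1 v2 v3 v4
  show "quad4 (3*k+2) (model_R k) (mv (3*k+2) ?M v1) (mv (3*k+2) ?M v2) (mv (3*k+2) ?M v3) (mv (3*k+2) ?M v4)
             = quad4 (3*k+2) (curv (gF k eps F) (3*k+2) P) v1 v2 v3 v4"
    using quad_M[of P v1 v2 v3 v4] by (subst quad4_cong[OF r r r r]) auto
qed

lemma part2: "\<exists>Bv. lin_indep_basis (3*k+2) Bv \<and>
        (\<forall>a<3*k+2. \<forall>b<3*k+2. bil (3*k+2) (gF k eps F P) (Bv a) (Bv b) = model_ip k eps a b) \<and>
        (\<forall>a<3*k+2. \<forall>b<3*k+2. \<forall>c<3*k+2. \<forall>d<3*k+2.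
            quad4 (3*k+2) (curv (gF k eps F) (3*k+2) P) (Bv a) (Bv b) (Bv c) (Bv d)
              = model_R k a b c d)"
proof (intro exI conjI allI impI)
  let ?B = "\<lambda>a. Nf k eps F P (ev a)"
  have MNe: "\<And>a x. x < 3*k+2 \<Longrightarrow> Mf k eps F P (?B a) x = ev a x" by (rule MN)
  show "lin_indep_basis (3*k+2) ?B"
    unfolding lin_indep_basis_def
  proof (intro allI impI)
    fix c :: "nat \<Rightarrow> real" and j
    assume h: "\<forall>a<3*k+2. (\<Sum>j<3*k+2. c j * ?B j a) = 0" and j: "j < 3*k+2"
    have Nc: "Nf k eps F P c a = 0" if a: "a < 3*k+2" for a
    proof -
      have "Nf k eps F P c a = Nf k eps F P (\<lambda>x. \<Sum>b<3*k+2. c b * ev b x) a"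
        by (rule loc_D[OF loc_Nf _ a]) (erule sum_ev3[symmetric])
      also have "\<dots> = (\<Sum>b<3*k+2. c b * Nf k eps F P (ev b) a)"
        by (rule lin_sum[OF _ lin_Nf a]) simp
      also have "\<dots> = 0" using h a by simp
      finally show ?thesis .
    qed
    have "c j = Mf k eps F P (Nf k eps F P c) j" using MN[OF j] by simp
    also have "\<dots> = Mf k eps F P (\<lambda>x. 0) j"
      by (rule loc_D[OF loc_Mf _ j]) (simp add: Nc)
    also have "\<dots> = 0" by (rule lin_zero[OF lin_Mf j])
    finally show "c j = 0" .
  qed
  fix a b assume a: "a < 3*k+2" and b: "b < 3*k+2"
  have "bil (3*k+2) (gF k eps F P) (?B a) (?B b) = bil (3*k+2) (model_ip k eps) (Mf k eps F P (?B a)) (Mf k eps F P (?B b))"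
    by (rule bil_M[symmetric])
  also have "\<dots> = bil (3*k+2) (model_ip k eps) (ev a) (ev b)"
    by (rule bil_cong) (erule MNe)+
  also have "\<dots> = model_ip k eps a b" by (rule bil_ev[OF a b])
  finally show "bil (3*k+2) (gF k eps F P) (?B a) (?B b) = model_ip k eps a b" .
next
  let ?B = "\<lambda>a. Nf k eps F P (ev a)"
  have MNe: "\<And>a x. x < 3*k+2 \<Longrightarrow> Mf k eps F P (?B a) x = ev a x" by (rule MN)
  fix a b c d assume a: "a < 3*k+2" and b: "b < 3*k+2" and c: "c < 3*k+2" and d: "d < 3*k+2"
  have "quad4 (3*k+2) (curv (gF k eps F) (3*k+2) P) (?B a) (?B b) (?B c) (?B d) =
      quad4 (3*k+2) (model_R k) (Mf k eps F P (?B a)) (Mf k eps F P (?B b)) (Mf k eps F P (?B c)) (Mf k eps F P (?B d))"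
    by (rule quad_M[symmetric])
  also have "\<dots> = quad4 (3*k+2) (model_R k) (ev a) (ev b) (ev c) (ev d)"
    by (rule quad4_cong) (erule MNe)+
  also have "\<dots> = model_R k a b c d" by (rule quad4_ev[OF a b c d])
  finally show "quad4 (3*k+2) (curv (gF k eps F) (3*k+2) P) (?B a) (?B b) (?B c) (?B d) = model_R k a b c d" .
qed

lemma part3: "\<exists>M. invertible_mat (3*k+2) M \<and>
        (\<forall>v w. bil (3*k+2) (gF k eps F Q) (mv (3*k+2) M v) (mv (3*k+2) M w)
               = bil (3*k+2) (gF k eps F P) v w) \<and>
        (\<forall>v1 v2 v3 v4. quad4 (3*k+2) (curv (gF k eps F) (3*k+2) Q)
               (mv (3*k+2) M v1) (mv (3*k+2) M v2) (mv (3*k+2) M v3) (mv (3*k+2) M v4)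
             = quad4 (3*k+2) (curv (gF k eps F) (3*k+2) P) v1 v2 v3 v4)"
proof -
  let ?f = "\<lambda>v. Nf k eps F Q (Mf k eps F P v)"
  let ?g = "\<lambda>v. Nf k eps F P (Mf k eps F Q v)"
  let ?M = "mm (3*k+2) (\<lambda>a b. Nf k eps F Q (ev b) a) (\<lambda>a b. Mf k eps F P (ev b) a)"
  let ?N = "mm (3*k+2) (\<lambda>a b. Nf k eps F P (ev b) a) (\<lambda>a b. Mf k eps F Q (ev b) a)"
  have rM: "rep (3*k+2) ?M ?f" by (rule rep_mm[OF repN repM loc_Nf])
  have rN: "rep (3*k+2) ?N ?g" by (rule rep_mm[OF repN repM loc_Nf])
  have lf: "loc (3*k+2) ?f" by (rule loc_comp[OF loc_Nf loc_Mf])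
  have lg: "loc (3*k+2) ?g" by (rule loc_comp[OF loc_Nf loc_Mf])
  have fg: "?f (?g w) a = w a" if a: "a < 3*k+2" for w a
  proof -
    have "?f (?g w) a = Nf k eps F Q (Mf k eps F Q w) a"
      by (rule loc_D[OF loc_Nf _ a]) (simp add: MN)
    also have "\<dots> = w a" by (rule NM[OF a])
    finally show ?thesis .
  qed
  have gf: "?g (?f w) a = w a" if a: "a < 3*k+2" for w a
  proof -
    have "?g (?f w) a = Nf k eps F P (Mf k eps F P w) a"
      by (rule loc_D[OF loc_Nf _ a]) (simp add: MN)
    also have "\<dots> = w a" by (rule NM[OF a])
    finally show ?thesis .
  qed
  have r: "\<And>v x. x < 3*k+2 \<Longrightarrow> mv (3*k+2) ?M v x = ?f v x"
    using rM unfolding rep_def by blast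
  have MQf: "\<And>v x. x < 3*k+2 \<Longrightarrow> Mf k eps F Q (?f v) x = Mf k eps F P v x" by (rule MN)
  show ?thesis
  proof (intro exI[of _ ?M] conjI allI)
    show "invertible_mat (3*k+2) ?M" by (rule inv_rep[OF rM rN lf lg fg gf])
    fix v w
    have "bil (3*k+2) (gF k eps F Q) (mv (3*k+2) ?M v) (mv (3*k+2) ?M w) = bil (3*k+2) (gF k eps F Q) (?f v) (?f w)"
      by (rule bil_cong) (erule r)+
    also have "\<dots> = bil (3*k+2) (model_ip k eps) (Mf k eps F Q (?f v)) (Mf k eps F Q (?f w))"
      by (rule bil_M[symmetric])
    also have "\<dots> = bil (3*k+2) (model_ip k eps) (Mf k eps F P v) (Mf k eps F P w)"
      by (rule bil_cong) (erule MQf)+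
    also have "\<dots> = bil (3*k+2) (gF k eps F P) v w" by (rule bil_M)
    finally show "bil (3*k+2) (gF k eps F Q) (mv (3*k+2) ?M v) (mv (3*k+2) ?M w) = bil (3*k+2) (gF k eps F P) v w" .
  next
    fix v1 v2 v3 v4
    have "quad4 (3*k+2) (curv (gF k eps F) (3*k+2) Q) (mv (3*k+2) ?M v1) (mv (3*k+2) ?M v2) (mv (3*k+2) ?M v3) (mv (3*k+2) ?M v4)
       = quad4 (3*k+2) (curv (gF k eps F) (3*k+2) Q) (?f v1) (?f v2) (?f v3) (?f v4)"
      by (rule quad4_cong) (erule r)+
    also have "\<dots> = quad4 (3*k+2) (model_R k) (Mf k eps F Q (?f v1)) (Mf k eps F Q (?f v2)) (Mf k eps F Q (?f v3)) (Mf k eps F Q (?f v4))"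
      by (rule quad_M[symmetric])
    also have "\<dots> = quad4 (3*k+2) (model_R k) (Mf k eps F P v1) (Mf k eps F P v2) (Mf k eps F P v3) (Mf k eps F P v4)"
      by (rule quad4_cong) (erule MQf)+
    also have "\<dots> = quad4 (3*k+2) (curv (gF k eps F) (3*k+2) P) v1 v2 v3 v4" by (rule quad_M)
    finally show "quad4 (3*k+2) (curv (gF k eps F) (3*k+2) Q) (mv (3*k+2) ?M v1) (mv (3*k+2) ?M v2) (mv (3*k+2) ?M v3) (mv (3*k+2) ?M v4)
       = quad4 (3*k+2) (curv (gF k eps F) (3*k+2) P) v1 v2 v3 v4" .
  qed
qed

end

theorem theorem1p4:
  fixes k :: nat and eps :: "nat \<Rightarrow> real" and F :: "nat \<Rightarrow> real \<Rightarrow> real"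
  assumes "k \<ge> 1"
    and "\<forall>i\<in>{1..k}. eps i = 1 \<or> eps i = -1"
    and "\<forall>i\<in>{1..k}. smooth_fun (F i)"
    and "\<forall>i\<in>{1..k}. \<forall>u. deriv (F i) u + 1 \<noteq> 0"
  shows
    \<comment> \<open>0-modeled: a linear isometry Phi_P onto the model with Phi_P^* R = R_P\<close>
    "(\<forall>P. \<exists>M. invertible_mat (3*k+2) M \<and>
        (\<forall>v w. bil (3*k+2) (model_ip k eps) (mv (3*k+2) M v) (mv (3*k+2) M w)
               = bil (3*k+2) (gF k eps F P) v w) \<and>
        (\<forall>v1 v2 v3 v4. quad4 (3*k+2) (model_R k)
               (mv (3*k+2) M v1) (mv (3*k+2) M v2) (mv (3*k+2) M v3) (mv (3*k+2) M v4)
             = quad4 (3*k+2) (curv (gF k eps F) (3*k+2) P) v1 v2 v3 v4))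
   \<and> \<comment> \<open>equivalently: a normalized basis of every tangent space\<close>
     (\<forall>P. \<exists>Bv. lin_indep_basis (3*k+2) Bv \<and>
        (\<forall>a<3*k+2. \<forall>b<3*k+2. bil (3*k+2) (gF k eps F P) (Bv a) (Bv b) = model_ip k eps a b) \<and>
        (\<forall>a<3*k+2. \<forall>b<3*k+2. \<forall>c<3*k+2. \<forall>d<3*k+2.
            quad4 (3*k+2) (curv (gF k eps F) (3*k+2) P) (Bv a) (Bv b) (Bv c) (Bv d)
              = model_R k a b c d))
   \<and> \<comment> \<open>in particular 0-curvature homogeneous\<close>
     (\<forall>P Q. \<exists>M. invertible_mat (3*k+2) M \<and>
        (\<forall>v w. bil (3*k+2) (gF k eps F Q) (mv (3*k+2) M v) (mv (3*k+2) M w)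
               = bil (3*k+2) (gF k eps F P) v w) \<and>
        (\<forall>v1 v2 v3 v4. quad4 (3*k+2) (curv (gF k eps F) (3*k+2) Q)
               (mv (3*k+2) M v1) (mv (3*k+2) M v2) (mv (3*k+2) M v3) (mv (3*k+2) M v4)
             = quad4 (3*k+2) (curv (gF k eps F) (3*k+2) P) v1 v2 v3 v4))"
proof -
  have dF: "\<And>i u. i \<in> {1..k} \<Longrightarrow> (F i has_real_derivative deriv (F i) u) (at u)"
  proof -
    fix i u assume i: "i \<in> {1..k}"
    have "((deriv ^^ 0) (F i)) differentiable (at u)" using assms(3) i unfolding smooth_fun_def by blast
    then show "(F i has_real_derivative deriv (F i) u) (at u)" by (simp add: DERIV_deriv_iff_real_differentiable)
  qed
  have ddF: "\<And>i u. i \<in> {1..k} \<Longrightarrow> (deriv (F i) has_real_derivative deriv (deriv (F i)) u) (at u)"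
  proof -
    fix i u assume i: "i \<in> {1..k}"
    have "((deriv ^^ 1) (F i)) differentiable (at u)" using assms(3) i unfolding smooth_fun_def by blast
    then show "(deriv (F i) has_real_derivative deriv (deriv (F i)) u) (at u)" by (simp add: DERIV_deriv_iff_real_differentiable)
  qed
  have epsq: "\<And>i. i \<in> {1..k} \<Longrightarrow> eps i * eps i = 1"
    using assms(2) by fastforce
  interpret S: setting2 k eps F
    by unfold_locales (use dF ddF epsq assms(4) in auto)
  show ?thesis using S.part1 S.part2 S.part3 by blast
qed


end
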